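(* Let $*\in\{s,w\}$. 1. For every matroid $M$ (an element of $\operatorname{Gr}(r,\mathbb{K}^n)$), the realization spaces $\operatorname{Real}^*_{\triangle}(M)$ and $\operatorname{Real}_{\mathcal{T}\triangle}(M)$ are contractible. These are taken with respect to the unique morphisms $\triangle\to\mathbb{K}$ and $\mathcal{T}\triangle\to\mathbb{K}$. 2. For every oriented matroid $M$ (an element of $\operatorname{Gr}(r,\mathbb{S}^n)$), $\operatorname{Real}_{\mathcal{T}\mathbb{R}}(M)$ is contractible. This is taken with respect to $\operatorname{ph}:\mathcal{T}\mathbb{R}\to\mathbb{S}$. 3. For every $M\in\operatorname{Gr}^*(r,\Phi^n)$, $\operatorname{Real}^*_{\mathcal{T}\mathbb{C}}(M)$ is contractible. This is taken with respect to $\operatorname{ph}:\mathcal{T}\mathbb{C}\to\Phi$. In particular all these realization spaces are nonempty.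
   Context: Hyperfields. A hyperfield $(F,\odot,\boxplus,1,0)$ has the following data and axioms. - $\odot$ is a commutative multiplication and $\boxplus$ is a hyperaddition assigning to each $x,y$ a nonempty subset $x\boxplus y\subseteq F$ (extended to subsets by unions). - $\boxplus$ is commutative and associative, and $x\boxplus 0=\{x\}$. - Each $x$ has a unique $-x$ with $0\in x\boxplus(-x)$, and $x\in y\boxplus z \iff z\in x\boxplus(-y)$. - $(F\setminus\{0\},\odot,1)$ is an abelian group $F^\times$, $0\odot x=0$, and $x\odot(y\boxplus z)=(x\odot y)\boxplus(x\odot z)$. A homomorphism (morphism) $h$ satisfies $h(0)=0$, $h(1)=1$, $h(xy)=h(x)h(y)$ and $h(x\boxplus y)\subseteq h(x)\boxplus h(y)$. Hyperfields, all with multiplication that of $\mathbb{C}$. - $\mathbb{K}=\{0,1\}$ with $1\boxplus1=\{0,1\}$. - $\mathbb{S}=\{-1,0,1\}$ with $1\boxplus1=\{1\}$, $(-1)\boxplus(-1)=\{-1\}$, $1\boxplus(-1)=\{-1,0,1\}$. - $\Phi=S^1\cup\{0\}$ with $a\boxplus a=\{a\}$ and $a\boxplus(-a)=S^1\cup\{0\}$; for $b\ne\pm a$, $a\boxplus b$ is the shortest closed arc joining $a,b$. - $\triangle=\mathbb{R}_{\ge0}$ with $a\boxplus b=[|a-b|,a+b]$. - $\mathcal{T}\triangle=\mathbb{R}_{\ge0}$ with $a\boxplus b=\{\max(a,b)\}$ if $a\ne b$, and $a\boxplus a=[0,a]$. - $\mathcal{T}\mathbb{R}=\mathbb{R}$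 with $a\boxplus b=\{a\}$ if $|a|>|b|$ or $a=b$, and $a\boxplus(-a)=[-|a|,|a|]$. - $\mathcal{T}\mathbb{C}=\mathbb{C}$ with: $a\boxplus b=\{a\}$ if $|a|>|b|$; $a\boxplus(-a)=\{x:|x|\le|a|\}$; if $|a|=|b|$ and $b\ne-a$, $a\boxplus b$ is the shortest closed arc from $a$ to $b$ on the circle of radius $|a|$. $\triangle,\mathcal{T}\triangle,\mathcal{T}\mathbb{R},\mathcal{T}\mathbb{C}$ are topologized with the Euclidean topology. Equivalently, the resulting realization spaces are the same if one uses the 0-coarse topology, whose open sets are the whole space and the Euclidean-open sets not containing $0$. $\operatorname{ph}(x)=x/|x|$ for $x\ne0$, and $\operatorname{ph}(0)=0$. The unique morphism to $\mathbb{K}$ sends $0\mapsto0$ and nonzero elements to $1$. Grassmannians. A strong Grassmann–Plücker (GP) function of rank $r$ on $E=\{1,\dots,n\}$ is a function $\varphi:E^r\to F$ with the following properties. - $\varphi$ is not identically $0$. - $\varphi$ is alternating. - For all $(i_1,\dots,i_{r+1})\in E^{r+1}$ and $(j_1,\dots,j_{r-1})\in E^{r-1}$: $$0\in\boxplus_{k=1}^{r+1}(-1)^k\varphi(i_1,\dots,\widehat{i_k},\dots,i_{r+1})\odot\varphi(i_k,j_1,\dots,j_{r-1}).$$ A weak GP function is a function $\varphi:E^r\to F$ with the following properties. - $\varphi$ is nonzero and alternating. - Its support is the set of bases of a matroid. - The relation holds whenever $|\{i\}\setminus\{j\}|=3$. $\operatorname{Gr}^s$ and $\operatorname{Gr}^w$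 are the sets of classes modulo $\varphi\sim\alpha\varphi$, $\alpha\in F^\times$. For $\mathbb{K},\mathbb{S},\mathcal{T}\mathbb{R},\mathcal{T}\triangle$ strong and weak coincide, and one writes $\operatorname{Gr}$ and $\operatorname{Real}$. The topology is the subspace topology of $(F^{E^r}\setminus\{0\})/F^\times$, which carries the product and quotient topologies. Realization spaces. For a morphism $f:F\to F'$ and $M\in\operatorname{Gr}^*(r,F'^n)$, $\operatorname{Real}^*_F(M)$ is the preimage of $M$ under $[\varphi]\mapsto[f\circ\varphi]$, with the subspace topology of $\operatorname{Gr}^*(r,F^n)$. *)

theory Defs
  imports "HOL-Analysis.Analysis"
begin

text \<open>All hyperfields considered are subsets of the complex numbers with the complex
multiplication, unit 1 and zero 0; the data recorded are the carrier, the hyperaddition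
and the (unique) hyperinverse.\<close>

record hyperfield =
  hcarrier :: "complex set"
  hadd :: "complex \<Rightarrow> complex \<Rightarrow> complex set"
  hneg :: "complex \<Rightarrow> complex"

definition ph :: "complex \<Rightarrow> complex" where
  "ph z = (if z = 0 then 0 else z / complex_of_real (cmod z))"

text \<open>Shortest closed arc on the unit circle joining a and b (for a, b of modulus 1, b not -a).\<close>
definition unit_arc :: "complex \<Rightarrow> complex \<Rightarrow> complex set" where
  "unit_arc a b = {ph ((1 - complex_of_real t) * a + complex_of_real t * b) | t. t \<in> {0..1}}"

definition Krasner :: hyperfield where
  "Krasner = \<lparr> hcarrier = {0, 1},
     hadd = (\<lambda>a b. if a = 0 then {b} else if b = 0 then {a} else {0, 1}),
     hneg = (\<lambda>a. a) \<rparr>"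

definition Sign :: hyperfield where
  "Sign = \<lparr> hcarrier = {-1, 0, 1},
     hadd = (\<lambda>a b. if a = 0 then {b} else if b = 0 then {a} else if a = b then {a}
                   else {-1, 0, 1}),
     hneg = uminus \<rparr>"

definition Phase :: hyperfield where
  "Phase = \<lparr> hcarrier = {z. cmod z = 1} \<union> {0},
     hadd = (\<lambda>a b. if a = 0 then {b} else if b = 0 then {a} else if a = b then {a}
                   else if b = - a then {z. cmod z = 1} \<union> {0}
                   else unit_arc a b),
     hneg = uminus \<rparr>"

definition Triangle :: hyperfield where
  "Triangle = \<lparr> hcarrier = complex_of_real ` {0..},
     hadd = (\<lambda>a b. complex_of_real ` {\<bar>Re a - Re b\<bar> .. Re a + Re b}),
     hneg = (\<lambda>a. a) \<rparr>"

definition TropTriangle :: hyperfield where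
  "TropTriangle = \<lparr> hcarrier = complex_of_real ` {0..},
     hadd = (\<lambda>a b. if a \<noteq> b then {complex_of_real (max (Re a) (Re b))}
                   else complex_of_real ` {0 .. Re a}),
     hneg = (\<lambda>a. a) \<rparr>"

definition TropReal :: hyperfield where
  "TropReal = \<lparr> hcarrier = \<real>,
     hadd = (\<lambda>a b. if cmod a > cmod b \<or> a = b then {a}
                   else if cmod b > cmod a then {b}
                   else complex_of_real ` {- cmod a .. cmod a}),
     hneg = uminus \<rparr>"

definition TropComplex :: hyperfield where
  "TropComplex = \<lparr> hcarrier = UNIV,
     hadd = (\<lambda>a b. if cmod a > cmod b then {a}
                   else if cmod b > cmod a then {b}
                   else if b = - a then cball 0 (cmod a)
                   else {complex_of_real (cmod a) * ph ((1 - complex_of_real t) * a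
                           + complex_of_real t * b) | t. t \<in> {0..1}}),
     hneg = uminus \<rparr>"

definition htop :: "hyperfield \<Rightarrow> complex topology" where
  "htop F = subtopology euclidean (hcarrier F)"

definition toK :: "complex \<Rightarrow> complex" where
  "toK z = (if z = 0 then 0 else 1)"

text \<open>E = {1..n}; elements of E^r are lists of length r with entries in E.\<close>
definition tuples :: "nat \<Rightarrow> nat \<Rightarrow> nat list set" where
  "tuples r n = {xs. length xs = r \<and> set xs \<subseteq> {1..n}}"

fun hsum :: "hyperfield \<Rightarrow> complex list \<Rightarrow> complex set" where
  "hsum F [] = {0}"
| "hsum F (x # xs) = (\<Union>y \<in> hsum F xs. hadd F x y)"

definition alternating :: "hyperfield \<Rightarrow> nat \<Rightarrow> nat \<Rightarrow> (nat list \<Rightarrow> complex) \<Rightarrow> bool" where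
  "alternating F r n \<phi> \<longleftrightarrow>
     (\<forall>xs \<in> tuples r n. \<not> distinct xs \<longrightarrow> \<phi> xs = 0) \<and>
     (\<forall>xs \<in> tuples r n. \<forall>k l. k < l \<and> l < r \<longrightarrow>
         \<phi> (xs[k := xs ! l, l := xs ! k]) = hneg F (\<phi> xs))"

definition del_at :: "nat \<Rightarrow> 'a list \<Rightarrow> 'a list" where
  "del_at k xs = take k xs @ drop (Suc k) xs"

text \<open>The Grassmann--Pluecker relation for (i_1..i_{r+1}) and (j_1..j_{r-1});
 (-1)^k \<odot> x is the k-fold hyperinverse of x (k counted from 1).\<close>
definition GP_rel :: "hyperfield \<Rightarrow> nat \<Rightarrow> (nat list \<Rightarrow> complex) \<Rightarrow> nat list \<Rightarrow> nat list \<Rightarrow> bool" where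
  "GP_rel F r \<phi> is js \<longleftrightarrow>
     0 \<in> hsum F (map (\<lambda>k. (hneg F ^^ (Suc k)) (\<phi> (del_at k is) * \<phi> ((is ! k) # js))) [0..<Suc r])"

definition matroid_bases :: "nat set \<Rightarrow> nat set set \<Rightarrow> bool" where
  "matroid_bases E B \<longleftrightarrow> B \<noteq> {} \<and> (\<forall>X \<in> B. X \<subseteq> E) \<and>
     (\<forall>B1 \<in> B. \<forall>B2 \<in> B. \<forall>x \<in> B1 - B2. \<exists>y \<in> B2 - B1. insert y (B1 - {x}) \<in> B)"

definition strong_GP :: "hyperfield \<Rightarrow> nat \<Rightarrow> nat \<Rightarrow> (nat list \<Rightarrow> complex) \<Rightarrow> bool" where
  "strong_GP F r n \<phi> \<longleftrightarrow>
     \<phi> \<in> tuples r n \<rightarrow>\<^sub>E hcarrier F \<and> (\<exists>xs \<in> tuples r n. \<phi> xs \<noteq> 0) \<and> alternating F r n \<phi> \<and>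
     (\<forall>is \<in> tuples (Suc r) n. \<forall>js \<in> tuples (r - 1) n. GP_rel F r \<phi> is js)"

definition weak_GP :: "hyperfield \<Rightarrow> nat \<Rightarrow> nat \<Rightarrow> (nat list \<Rightarrow> complex) \<Rightarrow> bool" where
  "weak_GP F r n \<phi> \<longleftrightarrow>
     \<phi> \<in> tuples r n \<rightarrow>\<^sub>E hcarrier F \<and> (\<exists>xs \<in> tuples r n. \<phi> xs \<noteq> 0) \<and> alternating F r n \<phi> \<and>
     matroid_bases {1..n} {set xs | xs. xs \<in> tuples r n \<and> \<phi> xs \<noteq> 0} \<and>
     (\<forall>is \<in> tuples (Suc r) n. \<forall>js \<in> tuples (r - 1) n.
        card (set is - set js) = 3 \<longrightarrow> GP_rel F r \<phi> is js)"

definition orbit :: "hyperfield \<Rightarrow> nat \<Rightarrow> nat \<Rightarrow> (nat list \<Rightarrow> complex) \<Rightarrow> (nat list \<Rightarrow> complex) set" where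
  "orbit F r n \<phi> = {restrict (\<lambda>t. \<alpha> * \<phi> t) (tuples r n) | \<alpha>. \<alpha> \<in> hcarrier F - {0}}"

definition Gr :: "(hyperfield \<Rightarrow> nat \<Rightarrow> nat \<Rightarrow> (nat list \<Rightarrow> complex) \<Rightarrow> bool)
    \<Rightarrow> hyperfield \<Rightarrow> nat \<Rightarrow> nat \<Rightarrow> (nat list \<Rightarrow> complex) set set" where
  "Gr P F r n = {orbit F r n \<phi> | \<phi>. P F r n \<phi>}"

definition quotient_topology :: "'a topology \<Rightarrow> ('a \<Rightarrow> 'b) \<Rightarrow> 'b topology" where
  "quotient_topology X q =
     topology (\<lambda>U. U \<subseteq> q ` topspace X \<and> openin X {x \<in> topspace X. q x \<in> U})"

definition fun_space_top :: "hyperfield \<Rightarrow> nat \<Rightarrow> nat \<Rightarrow> (nat list \<Rightarrow> complex) topology" where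
  "fun_space_top F r n =
     subtopology (product_topology (\<lambda>_. htop F) (tuples r n))
       (topspace (product_topology (\<lambda>_. htop F) (tuples r n)) - {restrict (\<lambda>_. 0) (tuples r n)})"

definition proj_top :: "hyperfield \<Rightarrow> nat \<Rightarrow> nat \<Rightarrow> (nat list \<Rightarrow> complex) set topology" where
  "proj_top F r n = quotient_topology (fun_space_top F r n) (orbit F r n)"

text \<open>Realization space of M in Gr^P(r, F'^n) over F along the morphism f : F \<rightarrow> F'.\<close>
definition Real_set :: "(hyperfield \<Rightarrow> nat \<Rightarrow> nat \<Rightarrow> (nat list \<Rightarrow> complex) \<Rightarrow> bool)
    \<Rightarrow> hyperfield \<Rightarrow> hyperfield \<Rightarrow> (complex \<Rightarrow> complex) \<Rightarrow> nat \<Rightarrow> nat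
    \<Rightarrow> (nat list \<Rightarrow> complex) set \<Rightarrow> (nat list \<Rightarrow> complex) set set" where
  "Real_set P F F' f r n M =
     {C \<in> Gr P F r n. \<exists>\<phi> \<in> C. orbit F' r n (restrict (f \<circ> \<phi>) (tuples r n)) = M}"

definition Real_top :: "(hyperfield \<Rightarrow> nat \<Rightarrow> nat \<Rightarrow> (nat list \<Rightarrow> complex) \<Rightarrow> bool)
    \<Rightarrow> hyperfield \<Rightarrow> hyperfield \<Rightarrow> (complex \<Rightarrow> complex) \<Rightarrow> nat \<Rightarrow> nat
    \<Rightarrow> (nat list \<Rightarrow> complex) set \<Rightarrow> (nat list \<Rightarrow> complex) set topology" where
  "Real_top P F F' f r n M = subtopology (proj_top F r n) (Real_set P F F' f r n M)"

end

theory Submission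
  imports Defs
begin

definition pw :: "real \<Rightarrow> complex \<Rightarrow> complex" where
  "pw t z = (if z = 0 then 0 else ph z * complex_of_real (cmod z powr t))"

lemma ph_nz: "z \<noteq> 0 \<Longrightarrow> ph z \<noteq> 0" by (simp add: ph_def)
lemma cmod_ph: "z \<noteq> 0 \<Longrightarrow> cmod (ph z) = 1" by (simp add: ph_def norm_divide)
lemma ph_decomp: "complex_of_real (cmod z) * ph z = z" by (simp add: ph_def)
lemma ph_mult: "ph (a * b) = ph a * ph b" by (simp add: ph_def norm_mult)
lemma ph_scale: "c > 0 \<Longrightarrow> ph (complex_of_real c * w) = ph w"
  by (simp add: ph_def norm_mult)
lemma ph_ph: "ph (ph z) = ph z" by (cases "z = 0") (simp_all add: ph_def norm_divide)
lemma ph_uminus: "ph (- z) = - ph z" by (simp add: ph_def)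

lemma pw_0 [simp]: "pw t 0 = 0" by (simp add: pw_def)
lemma pw_eq_0_iff [simp]: "pw t z = 0 \<longleftrightarrow> z = 0" by (simp add: pw_def ph_nz)
lemma cmod_pw: "cmod (pw t z) = (if z = 0 then 0 else cmod z powr t)"
  by (simp add: pw_def norm_mult cmod_ph)
lemma ph_pw: "ph (pw t z) = ph z"
  by (cases "z = 0") (simp_all add: pw_def ph_def norm_mult norm_divide)
lemma pw_one [simp]: "pw 1 z = z" by (simp add: pw_def ph_def)
lemma pw_zero_exp: "pw 0 z = ph z" by (simp add: pw_def ph_def)
lemma pw_mult: "pw t (a * b) = pw t a * pw t b"
  by (simp add: pw_def ph_mult norm_mult powr_mult)
lemma pw_uminus: "pw t (- z) = - pw t z" by (simp add: pw_def ph_uminus)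
lemma pw_real: "x \<ge> 0 \<Longrightarrow> pw t (complex_of_real x) = complex_of_real (x powr t)"
  by (auto simp: pw_def ph_def)
lemma pw_real': "pw t (complex_of_real x) = complex_of_real (sgn x * \<bar>x\<bar> powr t)"
  by (auto simp: pw_def ph_def sgn_if)
lemma pw_decomp: "pw t z = complex_of_real (cmod (pw t z)) * ph z"
  by (metis ph_decomp ph_pw)

lemma powr_subadd:
  fixes x y t :: real
  assumes "0 \<le> x" "0 \<le> y" "0 \<le> t" "t \<le> 1"
  shows "(x + y) powr t \<le> x powr t + y powr t"
proof (cases "x = 0 \<or> y = 0")
  case True then show ?thesis using assms by auto
next
  case False
  hence xp: "x > 0" "y > 0" using assms by auto
  show ?thesis
  proof (cases "t = 0")
    case True then show ?thesis using xp by simp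
  next
    case False
    have "(x + y) powr t = (x + y) powr (t - 1) * (x + y)"
      using xp by (simp add: powr_diff)
    also have "\<dots> = x * (x + y) powr (t - 1) + y * (x + y) powr (t - 1)"
      by (simp add: algebra_simps)
    also have "\<dots> \<le> x * x powr (t - 1) + y * y powr (t - 1)"
      using xp assms by (intro add_mono mult_left_mono powr_mono2') auto
    also have "\<dots> = x powr t + y powr t" using xp by (simp add: powr_diff)
    finally show ?thesis .
  qed
qed


lemma hsum_morph:
  assumes cl: "\<And>a b. a \<in> hcarrier F \<Longrightarrow> b \<in> hcarrier F \<Longrightarrow> hadd F a b \<subseteq> hcarrier F"
    and mo: "\<And>a b. a \<in> hcarrier F \<Longrightarrow> b \<in> hcarrier F \<Longrightarrow> g ` hadd F a b \<subseteq> hadd F (g a) (g b)"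
    and z: "0 \<in> hcarrier F" "g 0 = 0"
  shows "set xs \<subseteq> hcarrier F \<Longrightarrow> hsum F xs \<subseteq> hcarrier F \<and> g ` hsum F xs \<subseteq> hsum F (map g xs)"
proof (induction xs)
  case Nil then show ?case using z by simp
next
  case (Cons x xs)
  then have x: "x \<in> hcarrier F" and IH: "hsum F xs \<subseteq> hcarrier F" "g ` hsum F xs \<subseteq> hsum F (map g xs)" by auto
  have "hsum F (x # xs) \<subseteq> hcarrier F" using cl x IH by auto
  moreover have "g ` hsum F (x # xs) \<subseteq> hsum F (map g (x # xs))"
  proof
    fix w assume "w \<in> g ` hsum F (x # xs)"
    then obtain y v where y: "y \<in> hsum F xs" and v: "v \<in> hadd F x y" and w: "w = g v" by auto
    have "w \<in> hadd F (g x) (g y)" using mo[of x y] x IH y v w by auto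
    moreover have "g y \<in> hsum F (map g xs)" using IH y by auto
    ultimately show "w \<in> hsum F (map g (x # xs))" by auto
  qed
  ultimately show ?case by blast
qed

definition pw_ok :: "hyperfield \<Rightarrow> real \<Rightarrow> bool" where
  "pw_ok F t \<longleftrightarrow> 0 \<in> hcarrier F \<and> (\<forall>a\<in>hcarrier F. \<forall>b\<in>hcarrier F. a * b \<in> hcarrier F)
     \<and> (\<forall>a\<in>hcarrier F. hneg F a \<in> hcarrier F) \<and> hneg F 0 = 0
     \<and> (\<forall>a\<in>hcarrier F. pw t a \<in> hcarrier F)
     \<and> (\<forall>a\<in>hcarrier F. pw t (hneg F a) = hneg F (pw t a))
     \<and> (\<forall>a\<in>hcarrier F. \<forall>b\<in>hcarrier F. hadd F a b \<subseteq> hcarrier F)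
     \<and> (\<forall>a\<in>hcarrier F. \<forall>b\<in>hcarrier F. pw t ` hadd F a b \<subseteq> hadd F (pw t a) (pw t b))"

lemma hneg_iter:
  assumes "pw_ok F t" "a \<in> hcarrier F"
  shows "(hneg F ^^ k) a \<in> hcarrier F \<and> (hneg F ^^ k) (pw t a) = pw t ((hneg F ^^ k) a)"
  using assms by (induction k) (auto simp: pw_ok_def)

lemma tuples_swap:
  assumes "xs \<in> tuples r n" "k < r" "l < r"
  shows "xs[k := xs ! l, l := xs ! k] \<in> tuples r n"
  using assms by (auto simp: tuples_def dest!: subsetD[OF set_update_subset_insert] intro!: nth_mem)

lemma tuples_del_at:
  assumes "ii \<in> tuples (Suc r) n" "k < Suc r"
  shows "del_at k ii \<in> tuples r n"
  using assms unfolding tuples_def del_at_def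
  by (auto dest: in_set_takeD in_set_dropD)

lemma tuples_cons:
  assumes "ii \<in> tuples (Suc r) n" "k < Suc r" "js \<in> tuples (r - 1) n" "0 < r"
  shows "(ii ! k) # js \<in> tuples r n"
  using assms nth_mem[of k ii] unfolding tuples_def by fastforce

lemma GP_rel_pw:
  assumes ok: "pw_ok F t" and r: "0 < r" and phi: "\<phi> \<in> tuples r n \<rightarrow>\<^sub>E hcarrier F"
    and ii: "ii \<in> tuples (Suc r) n" and js: "js \<in> tuples (r - 1) n"
    and gp: "GP_rel F r \<phi> ii js"
  shows "GP_rel F r (restrict (\<lambda>x. pw t (\<phi> x)) (tuples r n)) ii js"
proof -
  let ?L = "map (\<lambda>k. (hneg F ^^ (Suc k)) (\<phi> (del_at k ii) * \<phi> ((ii ! k) # js))) [0..<Suc r]"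
  have C: "set ?L \<subseteq> hcarrier F"
  proof
    fix w assume "w \<in> set ?L"
    then obtain k where k: "k < Suc r" and w: "w = (hneg F ^^ (Suc k)) (\<phi> (del_at k ii) * \<phi> ((ii ! k) # js))"
      by (auto simp del: upt_Suc funpow.simps)
    have "\<phi> (del_at k ii) * \<phi> ((ii ! k) # js) \<in> hcarrier F"
      using ok phi tuples_del_at[OF ii k] tuples_cons[OF ii k js r] unfolding pw_ok_def by blast
    then show "w \<in> hcarrier F" using hneg_iter[OF ok] w by blast
  qed
  have eq: "map (\<lambda>k. (hneg F ^^ (Suc k)) (restrict (\<lambda>x. pw t (\<phi> x)) (tuples r n) (del_at k ii) *
        restrict (\<lambda>x. pw t (\<phi> x)) (tuples r n) ((ii ! k) # js))) [0..<Suc r] = map (pw t) ?L"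
  proof (rule nth_equalityI)
    fix i assume "i < length (map (\<lambda>k. (hneg F ^^ (Suc k)) (restrict (\<lambda>x. pw t (\<phi> x)) (tuples r n) (del_at k ii) *
        restrict (\<lambda>x. pw t (\<phi> x)) (tuples r n) ((ii ! k) # js))) [0..<Suc r])"
    hence i: "i < Suc r" by simp
    have m: "\<phi> (del_at i ii) * \<phi> ((ii ! i) # js) \<in> hcarrier F"
      using ok phi tuples_del_at[OF ii i] tuples_cons[OF ii i js r] unfolding pw_ok_def by blast
    show "map (\<lambda>k. (hneg F ^^ (Suc k)) (restrict (\<lambda>x. pw t (\<phi> x)) (tuples r n) (del_at k ii) *
        restrict (\<lambda>x. pw t (\<phi> x)) (tuples r n) ((ii ! k) # js))) [0..<Suc r] ! i = map (pw t) ?L ! i"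
      using i tuples_del_at[OF ii i] tuples_cons[OF ii i js r] hneg_iter[OF ok m, of "Suc i"]
      by (simp add: pw_mult del: upt_Suc funpow.simps)
  qed simp
  have "hsum F ?L \<subseteq> hcarrier F \<and> pw t ` hsum F ?L \<subseteq> hsum F (map (pw t) ?L)"
    by (rule hsum_morph) (use ok C in \<open>auto simp: pw_ok_def\<close>)
  moreover have "0 \<in> hsum F ?L" using gp unfolding GP_rel_def .
  ultimately have "pw t 0 \<in> hsum F (map (pw t) ?L)" by blast
  then show ?thesis unfolding GP_rel_def eq by simp
qed

lemma alternating_pw:
  assumes ok: "pw_ok F t" and phi: "\<phi> \<in> tuples r n \<rightarrow>\<^sub>E hcarrier F" and alt: "alternating F r n \<phi>"
  shows "alternating F r n (restrict (\<lambda>x. pw t (\<phi> x)) (tuples r n))"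
  unfolding alternating_def
proof (intro conjI ballI allI impI)
  fix xs assume "xs \<in> tuples r n" "\<not> distinct xs"
  then show "restrict (\<lambda>x. pw t (\<phi> x)) (tuples r n) xs = 0" using alt by (simp add: alternating_def)
next
  fix xs k l assume xs: "xs \<in> tuples r n" and kl: "k < l \<and> l < r"
  have "xs[k := xs ! l, l := xs ! k] \<in> tuples r n" using tuples_swap[OF xs] kl by auto
  moreover have "\<phi> xs \<in> hcarrier F" using phi xs by auto
  ultimately show "restrict (\<lambda>x. pw t (\<phi> x)) (tuples r n) (xs[k := xs ! l, l := xs ! k]) =
       hneg F (restrict (\<lambda>x. pw t (\<phi> x)) (tuples r n) xs)"
    using alt xs kl ok by (auto simp: alternating_def pw_ok_def)
qed

lemma pw_PiE:
  assumes ok: "pw_ok F t" and phi: "\<phi> \<in> tuples r n \<rightarrow>\<^sub>E hcarrier F"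
  shows "restrict (\<lambda>x. pw t (\<phi> x)) (tuples r n) \<in> tuples r n \<rightarrow>\<^sub>E hcarrier F"
  using assms by (auto simp: pw_ok_def)

lemma strong_pw:
  assumes ok: "pw_ok F t" and r: "0 < r" and s: "strong_GP F r n \<phi>"
  shows "strong_GP F r n (restrict (\<lambda>x. pw t (\<phi> x)) (tuples r n))"
  using s pw_PiE[OF ok] alternating_pw[OF ok] GP_rel_pw[OF ok r]
  unfolding strong_GP_def by auto

lemma weak_pw:
  assumes ok: "pw_ok F t" and r: "0 < r" and s: "weak_GP F r n \<phi>"
  shows "weak_GP F r n (restrict (\<lambda>x. pw t (\<phi> x)) (tuples r n))"
proof -
  have "{set xs |xs. xs \<in> tuples r n \<and> restrict (\<lambda>x. pw t (\<phi> x)) (tuples r n) xs \<noteq> 0}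
      = {set xs |xs. xs \<in> tuples r n \<and> \<phi> xs \<noteq> 0}" by auto
  then show ?thesis
    using s pw_PiE[OF ok] alternating_pw[OF ok] GP_rel_pw[OF ok r]
    unfolding weak_GP_def by auto
qed


lemma powr_diff_le:
  fixes x y z t :: real
  assumes "0 \<le> x" "0 \<le> y" "0 \<le> t" "t \<le> 1" "\<bar>x - y\<bar> \<le> z"
  shows "\<bar>x powr t - y powr t\<bar> \<le> z powr t"
proof -
  have z: "0 \<le> z" using assms by linarith
  have a: "x powr t \<le> z powr t + y powr t" if "0 \<le> x" "0 \<le> y" "\<bar>x - y\<bar> \<le> z" for x y
  proof -
    have "x \<le> z + y" using that by linarith
    hence "x powr t \<le> (z + y) powr t" using that z assms by (intro powr_mono2) auto
    also have "\<dots> \<le> z powr t + y powr t" using that z assms by (intro powr_subadd) auto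
    finally show ?thesis .
  qed
  show ?thesis using a[of x y] a[of y x] assms by (auto simp: abs_minus_commute)
qed

lemma pw_ok_Triangle:
  assumes t: "0 \<le> t" "t \<le> 1"
  shows "pw_ok Triangle t"
  unfolding pw_ok_def
proof (intro conjI ballI)
  fix a b assume a: "a \<in> hcarrier Triangle" and b: "b \<in> hcarrier Triangle"
  then obtain x y where x: "a = complex_of_real x" "x \<ge> 0" and y: "b = complex_of_real y" "y \<ge> 0"
    by (auto simp: Triangle_def)
  show "a * b \<in> hcarrier Triangle" using x y by (simp add: Triangle_def) (metis atLeast_iff image_eqI of_real_mult zero_le_mult_iff)
  show "hadd Triangle a b \<subseteq> hcarrier Triangle" using x y by (auto simp: Triangle_def)
  show "pw t ` hadd Triangle a b \<subseteq> hadd Triangle (pw t a) (pw t b)"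
  proof
    fix w assume "w \<in> pw t ` hadd Triangle a b"
    then obtain z where z: "\<bar>x - y\<bar> \<le> z" "z \<le> x + y" and w: "w = pw t (complex_of_real z)"
      using x y by (auto simp: Triangle_def)
    have z0: "0 \<le> z" using z by linarith
    have "z powr t \<le> (x + y) powr t" using z z0 t by (intro powr_mono2) auto
    also have "\<dots> \<le> x powr t + y powr t" using x y t by (intro powr_subadd) auto
    finally have u: "z powr t \<le> x powr t + y powr t" .
    have l: "\<bar>x powr t - y powr t\<bar> \<le> z powr t" using powr_diff_le[OF x(2) y(2) t z(1)] .
    show "w \<in> hadd Triangle (pw t a) (pw t b)"
      using u l w x y z0 by (auto simp: Triangle_def pw_real)
  qed
next
  fix a assume a: "a \<in> hcarrier Triangle"
  then obtain x where x: "a = complex_of_real x" "x \<ge> 0" by (auto simp: Triangle_def)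
  show "pw t a \<in> hcarrier Triangle" using x by (auto simp: Triangle_def pw_real)
qed (auto simp: Triangle_def)

lemma pw_ok_TropTriangle:
  assumes t: "0 \<le> t" "t \<le> 1"
  shows "pw_ok TropTriangle t"
  unfolding pw_ok_def
proof (intro conjI ballI)
  fix a b assume a: "a \<in> hcarrier TropTriangle" and b: "b \<in> hcarrier TropTriangle"
  then obtain x y where x: "a = complex_of_real x" "x \<ge> 0" and y: "b = complex_of_real y" "y \<ge> 0"
    by (auto simp: TropTriangle_def)
  show "a * b \<in> hcarrier TropTriangle" using x y by (simp add: TropTriangle_def) (metis atLeast_iff image_eqI of_real_mult zero_le_mult_iff)
  show "hadd TropTriangle a b \<subseteq> hcarrier TropTriangle" using x y by (auto simp: TropTriangle_def)
  show "pw t ` hadd TropTriangle a b \<subseteq> hadd TropTriangle (pw t a) (pw t b)"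
  proof
    fix w assume w: "w \<in> pw t ` hadd TropTriangle a b"
    show "w \<in> hadd TropTriangle (pw t a) (pw t b)"
    proof (cases "x = y")
      case True
      then obtain z where z: "0 \<le> z" "z \<le> x" and w: "w = pw t (complex_of_real z)"
        using w x y by (auto simp: TropTriangle_def)
      have "z powr t \<le> x powr t" using z t by (intro powr_mono2) auto
      then show ?thesis using True w x y z by (auto simp: TropTriangle_def pw_real)
    next
      case False
      then have w: "w = complex_of_real (max x y powr t)" using w x y
        by (auto simp: TropTriangle_def pw_real max_def)
      have "max x y powr t = max (x powr t) (y powr t)"
      proof (cases "x \<le> y")
        case True then show ?thesis using x y t powr_mono2[of t x y] by (simp add: max_def)
      next
        case False then show ?thesis using x y t powr_mono2[of t y x] by (simp add: max_def)
      qed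
      then show ?thesis using w x y t
        by (auto simp: TropTriangle_def pw_real max_def image_iff powr_ge_zero)
    qed
  qed
next
  fix a assume a: "a \<in> hcarrier TropTriangle"
  then obtain x where x: "a = complex_of_real x" "x \<ge> 0" by (auto simp: TropTriangle_def)
  show "pw t a \<in> hcarrier TropTriangle" using x by (auto simp: TropTriangle_def pw_real)
qed (auto simp: TropTriangle_def)


lemma pw_mono_cmod: "0 \<le> t \<Longrightarrow> cmod a \<le> cmod b \<Longrightarrow> cmod (pw t a) \<le> cmod (pw t b)"
  by (auto simp: cmod_pw intro: powr_mono2)

lemma pw_inj_cmod: "cmod a = cmod b \<Longrightarrow> pw t a = pw t b \<Longrightarrow> a = b"
  by (metis ph_decomp ph_pw)

lemma cmod_pw_eq: "cmod a = cmod b \<Longrightarrow> cmod (pw t a) = cmod (pw t b)"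
  by (cases "a = 0") (auto simp: cmod_pw)

lemma pw_Reals: "a \<in> \<real> \<Longrightarrow> pw t a \<in> \<real>"
  by (auto simp: pw_real' elim!: Reals_cases)

lemma pw_ok_TropReal:
  assumes t: "0 \<le> t" "t \<le> 1"
  shows "pw_ok TropReal t"
  unfolding pw_ok_def
proof (intro conjI ballI)
  fix a b assume a: "a \<in> hcarrier TropReal" and b: "b \<in> hcarrier TropReal"
  hence aR: "a \<in> \<real>" and bR: "b \<in> \<real>" by (auto simp: TropReal_def)
  show "a * b \<in> hcarrier TropReal" using aR bR by (auto simp: TropReal_def)
  show "hadd TropReal a b \<subseteq> hcarrier TropReal" using aR bR by (auto simp: TropReal_def)
  have paR: "pw t a \<in> \<real>" and pbR: "pw t b \<in> \<real>" using aR bR pw_Reals by auto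
  have realabs: "z \<in> complex_of_real ` {- cmod z .. cmod z}" if "z \<in> \<real>" for z
    using that by (auto elim!: Reals_cases intro!: image_eqI[OF refl])
  show "pw t ` hadd TropReal a b \<subseteq> hadd TropReal (pw t a) (pw t b)"
  proof
    fix w assume w: "w \<in> pw t ` hadd TropReal a b"
    consider "cmod a > cmod b \<or> a = b" | "\<not> (cmod a > cmod b \<or> a = b)" "cmod b > cmod a"
      | "\<not> (cmod a > cmod b \<or> a = b)" "\<not> cmod b > cmod a" by blast
    then show "w \<in> hadd TropReal (pw t a) (pw t b)"
    proof cases
      case 1
      then have w: "w = pw t a" using w by (auto simp: TropReal_def)
      have "cmod (pw t b) \<le> cmod (pw t a)" using 1 t pw_mono_cmod[of t b a] by auto
      then show ?thesis using w realabs[OF paR] by (auto simp: TropReal_def)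
    next
      case 2
      then have w: "w = pw t b" using w by (auto simp: TropReal_def)
      have "cmod (pw t a) \<le> cmod (pw t b)" using 2 t pw_mono_cmod[of t a b] by auto
      then show ?thesis using w realabs[OF pbR] by (auto simp: TropReal_def norm_minus_commute)
    next
      case 3
      then have eqm: "cmod a = cmod b" and ne: "a \<noteq> b" by auto
      have bma: "b = - a" using aR bR eqm ne by (auto elim!: Reals_cases simp: abs_if split: if_splits)
      have a0: "a \<noteq> 0" using ne bma by auto
      obtain z where z: "z \<in> {- cmod a .. cmod a}" and w: "w = pw t (complex_of_real z)"
        using w 3 by (auto simp: TropReal_def)
      have pb: "pw t b = - pw t a" by (simp add: bma pw_uminus)
      have pa0: "pw t a \<noteq> 0" using a0 by simp
      have "cmod (pw t (complex_of_real z)) \<le> cmod (pw t a)"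
        using z t by (intro pw_mono_cmod) auto
      moreover have "w \<in> \<real>" using w pw_Reals by auto
      ultimately have "w \<in> complex_of_real ` {- cmod (pw t a) .. cmod (pw t a)}"
        using w by (auto elim!: Reals_cases intro!: image_eqI[OF refl] simp: abs_le_iff)
      moreover have "\<not> (cmod (pw t a) > cmod (pw t b) \<or> pw t a = pw t b)" "\<not> cmod (pw t b) > cmod (pw t a)"
        using pb pa0 by auto
      ultimately show ?thesis by (simp add: TropReal_def)
    qed
  qed
next
  fix a assume a: "a \<in> hcarrier TropReal"
  show "pw t a \<in> hcarrier TropReal" using a pw_Reals by (auto simp: TropReal_def)
  show "pw t (hneg TropReal a) = hneg TropReal (pw t a)" by (simp add: TropReal_def pw_uminus)
qed (auto simp: TropReal_def)


lemma pw_scaled_ph: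
  assumes "c > 0"
  shows "pw t (complex_of_real c * ph v) = complex_of_real (c powr t) * ph v"
proof (cases "v = 0")
  case True then show ?thesis by (simp add: ph_def)
next
  case False
  have "cmod (complex_of_real c * ph v) = c" using assms False by (simp add: norm_mult cmod_ph)
  moreover have "ph (complex_of_real c * ph v) = ph v" using assms by (simp add: ph_scale ph_ph)
  moreover have "complex_of_real c * ph v \<noteq> 0" using assms False ph_nz by auto
  ultimately show ?thesis by (simp add: pw_def mult.commute)
qed

lemma TC_hadd_gt: "cmod a > cmod b \<Longrightarrow> hadd TropComplex a b = {a}"
  by (simp add: TropComplex_def)
lemma TC_hadd_lt: "cmod b > cmod a \<Longrightarrow> hadd TropComplex a b = {b}"
  by (simp add: TropComplex_def)
lemma TC_hadd_neg: "hadd TropComplex a (- a) = cball 0 (cmod a)"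
  by (simp add: TropComplex_def)
lemma TC_hadd_arc: "cmod a = cmod b \<Longrightarrow> b \<noteq> - a \<Longrightarrow> hadd TropComplex a b =
   {complex_of_real (cmod a) * ph ((1 - complex_of_real t) * a + complex_of_real t * b) | t. t \<in> {0..1}}"
  by (simp add: TropComplex_def)

lemma TC_mem_big: assumes "cmod b \<le> cmod a" shows "a \<in> hadd TropComplex a b"
proof -
  consider "cmod a > cmod b" | "cmod a = cmod b" "b = - a" | "cmod a = cmod b" "b \<noteq> - a"
    using assms by (metis antisym_conv1)
  then show ?thesis
  proof cases
    case 1 then show ?thesis by (simp add: TC_hadd_gt)
  next
    case 2 then show ?thesis by (simp add: TC_hadd_neg)
  next
    case 3
    have "a = complex_of_real (cmod a) * ph ((1 - complex_of_real 0) * a + complex_of_real 0 * b) \<and> (0::real) \<in> {0..1}"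
      by (simp add: ph_decomp)
    then show ?thesis unfolding TC_hadd_arc[OF 3] by blast
  qed
qed

lemma TC_mem_small: assumes "cmod a \<le> cmod b" shows "b \<in> hadd TropComplex a b"
proof -
  consider "cmod b > cmod a" | "cmod a = cmod b" "b = - a" | "cmod a = cmod b" "b \<noteq> - a"
    using assms by (metis antisym_conv1)
  then show ?thesis
  proof cases
    case 1 then show ?thesis by (simp add: TC_hadd_lt)
  next
    case 2 then show ?thesis by (simp add: TC_hadd_neg)
  next
    case 3
    have "b = complex_of_real (cmod a) * ph ((1 - complex_of_real 1) * a + complex_of_real 1 * b) \<and> (1::real) \<in> {0..1}"
      by (simp add: ph_decomp 3(1))
    then show ?thesis unfolding TC_hadd_arc[OF 3] by blast
  qed
qed

lemma pw_ok_TropComplex: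
  assumes t: "0 \<le> t" "t \<le> 1"
  shows "pw_ok TropComplex t"
  unfolding pw_ok_def
proof (intro conjI ballI)
  fix a b assume a: "a \<in> hcarrier TropComplex" and b: "b \<in> hcarrier TropComplex"
  show "pw t ` hadd TropComplex a b \<subseteq> hadd TropComplex (pw t a) (pw t b)"
  proof
    fix w assume w: "w \<in> pw t ` hadd TropComplex a b"
    consider "cmod a > cmod b" | "cmod b > cmod a" | "cmod a = cmod b" "b = - a"
      | "cmod a = cmod b" "b \<noteq> - a" by (meson linorder_neqE_linordered_idom)
    then show "w \<in> hadd TropComplex (pw t a) (pw t b)"
    proof cases
      case 1
      then have w: "w = pw t a" using w by (simp add: TC_hadd_gt)
      have "cmod (pw t b) \<le> cmod (pw t a)" using 1 t pw_mono_cmod[of t b a] by auto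
      then show ?thesis using w TC_mem_big by simp
    next
      case 2
      then have w: "w = pw t b" using w by (simp add: TC_hadd_lt)
      have "cmod (pw t a) \<le> cmod (pw t b)" using 2 t pw_mono_cmod[of t a b] by auto
      then show ?thesis using w TC_mem_small by simp
    next
      case 3
      have hb: "hadd TropComplex a b = cball 0 (cmod a)" using 3(2) TC_hadd_neg by simp
      obtain z where z: "cmod z \<le> cmod a" and w: "w = pw t z"
        using w unfolding hb by auto
      have pb: "pw t b = - pw t a" using 3(2) by (simp add: pw_uminus)
      have "cmod (pw t z) \<le> cmod (pw t a)" using z t by (intro pw_mono_cmod) auto
      then have "w \<in> cball 0 (cmod (pw t a))" using w by simp
      then show ?thesis using pb TC_hadd_neg[of "pw t a"] by simp
    next
      case 4
      have a0: "a \<noteq> 0" using 4 by auto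
      obtain s where s: "s \<in> {0..1}" and w: "w = pw t (complex_of_real (cmod a) *
          ph ((1 - complex_of_real s) * a + complex_of_real s * b))"
        using w 4 by (auto simp: TC_hadd_arc)
      have eqm: "cmod (pw t a) = cmod (pw t b)" using 4 cmod_pw_eq by blast
      have nb: "pw t b \<noteq> - pw t a"
      proof
        assume "pw t b = - pw t a"
        then have "pw t b = pw t (- a)" by (simp add: pw_uminus)
        then have "b = - a" using 4 by (intro pw_inj_cmod[of b "-a" t]) auto
        then show False using 4 by simp
      qed
      let ?v = "(1 - complex_of_real s) * a + complex_of_real s * b"
      have ca: "cmod a > 0" using a0 by simp
      have w': "w = complex_of_real (cmod a powr t) * ph ?v" using w pw_scaled_ph[OF ca] by simp
      define c where "c = complex_of_real (cmod a powr t / cmod a)"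
      have pa: "pw t a = c * a"
        using a0 by (simp add: pw_def ph_def field_simps c_def)
      have pbb: "pw t b = c * b"
        using a0 4 by (auto simp: pw_def ph_def field_simps c_def)
      have "(1 - complex_of_real s) * pw t a + complex_of_real s * pw t b
            = c * ?v"
        by (simp add: pa pbb algebra_simps)
      then have "ph ((1 - complex_of_real s) * pw t a + complex_of_real s * pw t b) = ph (c * ?v)"
        by simp
      also have "\<dots> = ph ?v" unfolding c_def using ca by (intro ph_scale) simp
      finally have "ph ((1 - complex_of_real s) * pw t a + complex_of_real s * pw t b) = ph ?v" .
      moreover have "cmod (pw t a) = cmod a powr t" using a0 by (simp add: cmod_pw)
      ultimately have "w \<in> {complex_of_real (cmod (pw t a)) * ph ((1 - complex_of_real s) * pw t a
                           + complex_of_real s * pw t b) | s. s \<in> {0..1}}"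
        using w' s by (intro CollectI exI[of _ s]) simp
      then show ?thesis using eqm nb by (simp add: TC_hadd_arc)
    qed
  qed
qed (simp_all add: TropComplex_def pw_uminus)


lemma istopology_quot:
  "istopology (\<lambda>U. U \<subseteq> q ` topspace X \<and> openin X {x \<in> topspace X. q x \<in> U})"
proof -
  have 1: "\<And>S T. {x \<in> topspace X. q x \<in> S \<inter> T} = {x \<in> topspace X. q x \<in> S} \<inter> {x \<in> topspace X. q x \<in> T}" by auto
  have 2: "\<And>K. {x \<in> topspace X. q x \<in> \<Union>K} = \<Union>((\<lambda>U. {x \<in> topspace X. q x \<in> U}) ` K)" by auto
  show ?thesis unfolding istopology_def 1 2 by (auto intro!: openin_Int openin_Union)
qed

lemma openin_quot:
  "openin (quotient_topology X q) U \<longleftrightarrow> U \<subseteq> q ` topspace X \<and> openin X {x \<in> topspace X. q x \<in> U}"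
  by (simp only: quotient_topology_def topology_inverse'[OF istopology_quot])

lemma topspace_quot: "topspace (quotient_topology X q) = q ` topspace X"
proof
  show "topspace (quotient_topology X q) \<subseteq> q ` topspace X"
    unfolding topspace_def openin_quot by auto
  have "openin (quotient_topology X q) (q ` topspace X)"
  proof -
    have "{x \<in> topspace X. q x \<in> q ` topspace X} = topspace X" by auto
    then show ?thesis unfolding openin_quot by simp
  qed
  then show "q ` topspace X \<subseteq> topspace (quotient_topology X q)"
    by (simp add: openin_subset)
qed

lemma continuous_map_quot: "continuous_map X (quotient_topology X q) q"
  unfolding continuous_map_def openin_quot topspace_quot by auto

definition scale :: "nat \<Rightarrow> nat \<Rightarrow> complex \<Rightarrow> (nat list \<Rightarrow> complex) \<Rightarrow> (nat list \<Rightarrow> complex)" where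
  "scale r n \<alpha> \<phi> = restrict (\<lambda>t. \<alpha> * \<phi> t) (tuples r n)"

lemma orbit_scale: "orbit F r n \<phi> = {scale r n \<alpha> \<phi> | \<alpha>. \<alpha> \<in> hcarrier F - {0}}"
  by (simp add: orbit_def scale_def)

lemma scale_scale: "scale r n \<alpha> (scale r n \<beta> \<phi>) = scale r n (\<alpha> * \<beta>) \<phi>"
  by (auto simp: scale_def fun_eq_iff)

lemma scale_one: "\<phi> \<in> extensional (tuples r n) \<Longrightarrow> scale r n 1 \<phi> = \<phi>"
  by (auto simp: scale_def fun_eq_iff extensional_def)

lemma scale_inv: "\<phi> \<in> extensional (tuples r n) \<Longrightarrow> \<alpha> \<noteq> 0 \<Longrightarrow> scale r n (inverse \<alpha>) (scale r n \<alpha> \<phi>) = \<phi>"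
  by (simp add: scale_scale scale_one)

locale grp =
  fixes F :: hyperfield
  assumes one: "1 \<in> hcarrier F"
    and mul: "\<And>a b. a \<in> hcarrier F \<Longrightarrow> b \<in> hcarrier F \<Longrightarrow> a * b \<in> hcarrier F"
    and inv: "\<And>a. a \<in> hcarrier F \<Longrightarrow> a \<noteq> 0 \<Longrightarrow> inverse a \<in> hcarrier F"
begin

lemma orbit_self: "\<phi> \<in> extensional (tuples r n) \<Longrightarrow> \<phi> \<in> orbit F r n \<phi>"
  unfolding orbit_scale using one scale_one[of \<phi> r n] by (auto intro!: exI[of _ 1])

lemma orbit_scale_eq:
  assumes "\<alpha> \<in> hcarrier F - {0}"
  shows "orbit F r n (scale r n \<alpha> \<phi>) = orbit F r n \<phi>"
proof
  show "orbit F r n (scale r n \<alpha> \<phi>) \<subseteq> orbit F r n \<phi>"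
    unfolding orbit_scale scale_scale using assms mul by fastforce
  show "orbit F r n \<phi> \<subseteq> orbit F r n (scale r n \<alpha> \<phi>)"
  proof
    fix \<psi> assume "\<psi> \<in> orbit F r n \<phi>"
    then obtain \<beta> where b: "\<beta> \<in> hcarrier F - {0}" "\<psi> = scale r n \<beta> \<phi>" unfolding orbit_scale by auto
    have "\<psi> = scale r n (\<beta> * inverse \<alpha>) (scale r n \<alpha> \<phi>)"
      using assms b by (simp add: scale_scale mult.assoc)
    moreover have "\<beta> * inverse \<alpha> \<in> hcarrier F - {0}" using assms b mul inv by auto
    ultimately show "\<psi> \<in> orbit F r n (scale r n \<alpha> \<phi>)" unfolding orbit_scale by blast
  qed
qed

lemma orbit_mem_eq: assumes "\<psi> \<in> orbit F r n \<phi>" shows "orbit F r n \<psi> = orbit F r n \<phi>"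
proof -
  obtain \<alpha> where "\<alpha> \<in> hcarrier F - {0}" "\<psi> = scale r n \<alpha> \<phi>" using assms unfolding orbit_scale by auto
  then show ?thesis using orbit_scale_eq by simp
qed

lemma orbit_eqD:
  assumes "orbit F r n \<phi> = orbit F r n \<psi>" "\<phi> \<in> extensional (tuples r n)"
  shows "\<exists>\<alpha> \<in> hcarrier F - {0}. \<phi> = scale r n \<alpha> \<psi>"
  using orbit_self[OF assms(2)] assms(1) unfolding orbit_scale[of F r n \<psi>] by auto

end


lemma pw_cont: "continuous_on ({0..1} \<times> (UNIV - {0})) (\<lambda>p. pw (1 - fst p) (snd p))"
proof -
  have "continuous_on ({0..1} \<times> (UNIV - {0}))
     (\<lambda>p::real \<times> complex. snd p / complex_of_real (cmod (snd p)) * complex_of_real (cmod (snd p) powr (1 - fst p)))"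
    by (intro continuous_intros) auto
  then show ?thesis
    by (rule continuous_on_cong[THEN iffD1, rotated 2]) (auto simp: pw_def ph_def)
qed

lemma topspace_htop [simp]: "topspace (htop F) = hcarrier F"
  by (simp add: htop_def)

lemma topspace_fun_space:
  "topspace (fun_space_top F r n) = (tuples r n \<rightarrow>\<^sub>E hcarrier F) - {restrict (\<lambda>_. 0) (tuples r n)}"
  by (simp add: fun_space_top_def Int_absorb1 Diff_subset)

lemma topspace_fun_space_iff:
  "\<phi> \<in> topspace (fun_space_top F r n) \<longleftrightarrow> \<phi> \<in> (tuples r n \<rightarrow>\<^sub>E hcarrier F) \<and> (\<exists>x\<in>tuples r n. \<phi> x \<noteq> 0)"
  unfolding topspace_fun_space by (auto simp: fun_eq_iff PiE_def extensional_def)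

lemma cont_proj_fun_space:
  assumes "k \<in> tuples r n"
  shows "continuous_map (fun_space_top F r n) euclidean (\<lambda>\<phi>. \<phi> k)"
proof -
  have "continuous_map (product_topology (\<lambda>_. htop F) (tuples r n)) (htop F) (\<lambda>\<phi>. \<phi> k)"
    using assms by (rule continuous_map_product_projection)
  moreover have "continuous_map (htop F) euclidean id"
    unfolding htop_def by (simp add: continuous_map_from_subtopology)
  ultimately have "continuous_map (product_topology (\<lambda>_. htop F) (tuples r n)) euclidean (id \<circ> (\<lambda>\<phi>. \<phi> k))"
    by (rule continuous_map_compose)
  then show ?thesis unfolding fun_space_top_def by (simp add: continuous_map_from_subtopology)
qed

lemma cont_into_fun_space:
  assumes ext: "\<And>z. z \<in> topspace Z \<Longrightarrow> g z \<in> topspace (fun_space_top F r n)"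
    and comp: "\<And>k. k \<in> tuples r n \<Longrightarrow> continuous_map Z euclidean (\<lambda>z. g z k)"
  shows "continuous_map Z (fun_space_top F r n) g"
  unfolding fun_space_top_def continuous_map_in_subtopology
proof
  show "continuous_map Z (product_topology (\<lambda>_. htop F) (tuples r n)) g"
    unfolding continuous_map_componentwise
  proof (intro conjI ballI)
    show "g ` topspace Z \<subseteq> extensional (tuples r n)" using ext by (auto simp: topspace_fun_space PiE_def)
    fix k assume k: "k \<in> tuples r n"
    show "continuous_map Z (htop F) (\<lambda>x. g x k)"
      unfolding htop_def continuous_map_in_subtopology using comp[OF k] ext k
      by (auto simp: topspace_fun_space)
  qed
  show "g \<in> topspace Z \<rightarrow> topspace (product_topology (\<lambda>_. htop F) (tuples r n)) -
      {\<lambda>x\<in>tuples r n. 0}" using ext by (auto simp: topspace_fun_space)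
qed

context grp begin

lemma scale_top:
  "\<phi> \<in> topspace (fun_space_top F r n) \<Longrightarrow> \<alpha> \<in> hcarrier F - {0} \<Longrightarrow> scale r n \<alpha> \<phi> \<in> topspace (fun_space_top F r n)"
  unfolding topspace_fun_space_iff by (auto simp: scale_def intro!: mul)

lemma scale_cont:
  assumes a: "\<alpha> \<in> hcarrier F - {0}"
  shows "continuous_map (fun_space_top F r n) (fun_space_top F r n) (scale r n \<alpha>)"
proof (rule cont_into_fun_space)
  show "scale r n \<alpha> z \<in> topspace (fun_space_top F r n)" if "z \<in> topspace (fun_space_top F r n)" for z
    using scale_top[OF that a] .
  fix k assume k: "k \<in> tuples r n"
  have "continuous_map (fun_space_top F r n) euclidean ((\<lambda>z. \<alpha> * z) \<circ> (\<lambda>\<phi>. \<phi> k))"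
    by (rule continuous_map_compose[OF cont_proj_fun_space[OF k]]) (simp add: continuous_intros)
  then show "continuous_map (fun_space_top F r n) euclidean (\<lambda>z. scale r n \<alpha> z k)"
    using k by (simp add: scale_def o_def)
qed

lemma q_open:
  assumes B: "openin (fun_space_top F r n) B"
  shows "openin (proj_top F r n) (orbit F r n ` B)"
  unfolding proj_top_def openin_quot
proof
  show "orbit F r n ` B \<subseteq> orbit F r n ` topspace (fun_space_top F r n)"
    using openin_subset[OF B] by auto
  let ?X = "fun_space_top F r n"
  have eq: "{x \<in> topspace ?X. orbit F r n x \<in> orbit F r n ` B}
      = (\<Union>\<alpha> \<in> hcarrier F - {0}. {x \<in> topspace ?X. scale r n \<alpha> x \<in> B})"
  proof (intro equalityI subsetI)
    fix x assume "x \<in> {x \<in> topspace ?X. orbit F r n x \<in> orbit F r n ` B}"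
    then obtain b where x: "x \<in> topspace ?X" and b: "b \<in> B" and eqo: "orbit F r n x = orbit F r n b" by auto
    have bt: "b \<in> topspace ?X" using b openin_subset[OF B] by auto
    obtain \<gamma> where g: "\<gamma> \<in> hcarrier F - {0}" "x = scale r n \<gamma> b"
      using orbit_eqD[OF eqo] x unfolding topspace_fun_space by (auto simp: PiE_def)
    have "scale r n (inverse \<gamma>) x = b"
      using g bt scale_inv[of b r n \<gamma>] unfolding topspace_fun_space by (auto simp: PiE_def)
    moreover have "inverse \<gamma> \<in> hcarrier F - {0}" using g inv by auto
    ultimately show "x \<in> (\<Union>\<alpha> \<in> hcarrier F - {0}. {x \<in> topspace ?X. scale r n \<alpha> x \<in> B})"
      using x b by auto
  next
    fix x assume "x \<in> (\<Union>\<alpha> \<in> hcarrier F - {0}. {x \<in> topspace ?X. scale r n \<alpha> x \<in> B})"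
    then obtain \<alpha> where a: "\<alpha> \<in> hcarrier F - {0}" and x: "x \<in> topspace ?X" and sb: "scale r n \<alpha> x \<in> B" by auto
    have "orbit F r n (scale r n \<alpha> x) = orbit F r n x" using orbit_scale_eq[OF a] .
    then show "x \<in> {x \<in> topspace ?X. orbit F r n x \<in> orbit F r n ` B}"
      using x sb by (metis (mono_tags, lifting) image_eqI mem_Collect_eq)
  qed
  show "openin ?X {x \<in> topspace ?X. orbit F r n x \<in> orbit F r n ` B}"
    unfolding eq
    by (intro openin_Union) (auto intro!: openin_continuous_map_preimage[OF scale_cont B])
qed

end


locale setting = grp F for F +
  fixes F' :: hyperfield and f :: "complex \<Rightarrow> complex"
    and P :: "hyperfield \<Rightarrow> nat \<Rightarrow> nat \<Rightarrow> (nat list \<Rightarrow> complex) \<Rightarrow> bool"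
    and r n :: nat and M :: "(nat list \<Rightarrow> complex) set"
  assumes one': "1 \<in> hcarrier F'"
    and sub': "hcarrier F' - {0} \<subseteq> hcarrier F"
    and pwC: "\<And>t a. t \<in> {0..1} \<Longrightarrow> a \<in> hcarrier F \<Longrightarrow> pw t a \<in> hcarrier F"
    and f_pw: "\<And>t a. t \<in> {0..1} \<Longrightarrow> a \<in> hcarrier F \<Longrightarrow> f (pw t a) = f a"
    and pw0: "\<And>a. a \<in> hcarrier F \<Longrightarrow> pw 0 a = f a"
    and f0: "\<And>a. a \<in> hcarrier F \<Longrightarrow> f a = 0 \<longleftrightarrow> a = 0"
    and Ppw: "\<And>t \<phi>. t \<in> {0..1} \<Longrightarrow> P F r n \<phi> \<Longrightarrow> P F r n (restrict (\<lambda>x. pw t (\<phi> x)) (tuples r n))"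
    and Pin: "\<And>\<phi>. P F r n \<phi> \<Longrightarrow> \<phi> \<in> tuples r n \<rightarrow>\<^sub>E hcarrier F \<and> (\<exists>xs\<in>tuples r n. \<phi> xs \<noteq> 0)"
begin

abbreviation "X \<equiv> fun_space_top F r n"
abbreviation "q \<equiv> orbit F r n"
abbreviation "Q \<equiv> proj_top F r n"
abbreviation "R \<equiv> Real_set P F F' f r n M"

definition "S = {\<phi> \<in> topspace X. q \<phi> \<in> R}"
definition "G s \<phi> = restrict (\<lambda>x. pw (1 - s) (\<phi> x)) (tuples r n)"
definition "rep C = (SOME \<phi>. \<phi> \<in> C)"

lemma P_top: "P F r n \<phi> \<Longrightarrow> \<phi> \<in> topspace X"
  using Pin unfolding topspace_fun_space_iff by blast

lemma R_D:
  assumes "C \<in> R"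
  obtains \<psi> where "P F r n \<psi>" "C = q \<psi>" and "\<exists>\<phi> \<in> C. orbit F' r n (restrict (f \<circ> \<phi>) (tuples r n)) = M"
  using assms unfolding Real_set_def Gr_def by auto

lemma orbit_top: "\<psi> \<in> topspace X \<Longrightarrow> \<phi> \<in> q \<psi> \<Longrightarrow> \<phi> \<in> topspace X \<and> q \<phi> = q \<psi>"
  using scale_top orbit_mem_eq unfolding orbit_scale by blast

lemma memC: assumes "C \<in> R" "\<phi> \<in> C" shows "\<phi> \<in> topspace X" "q \<phi> = C"
proof -
  obtain \<psi> where "P F r n \<psi>" "C = q \<psi>" using R_D[OF assms(1)] by metis
  then show "\<phi> \<in> topspace X" "q \<phi> = C" using orbit_top[of \<psi> \<phi>] P_top assms(2) by auto
qed

lemma rep: assumes "C \<in> R" shows "rep C \<in> C"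
proof -
  obtain \<psi> where "P F r n \<psi>" "C = q \<psi>" using R_D[OF assms(1)] by metis
  then have "\<psi> \<in> C" using orbit_self[of \<psi> r n] P_top[of \<psi>] by (auto simp: topspace_fun_space PiE_def)
  then show ?thesis unfolding rep_def by (rule someI[of "\<lambda>x. x \<in> C"])
qed

lemma R_sub: "R \<subseteq> q ` topspace X"
proof
  fix C assume C: "C \<in> R"
  then show "C \<in> q ` topspace X" using memC[OF C rep[OF C]] by (metis image_eqI)
qed

lemma topspace_Q: "topspace Q = q ` topspace X"
  by (simp add: proj_top_def topspace_quot)

lemma topspace_RT: "topspace (subtopology Q R) = R"
  using R_sub topspace_Q by auto

lemma G_top: "\<phi> \<in> topspace X \<Longrightarrow> s \<in> {0..1} \<Longrightarrow> G s \<phi> \<in> topspace X"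
  unfolding topspace_fun_space_iff G_def by (auto intro!: pwC)

lemma G_scale: "G s (scale r n \<alpha> \<phi>) = scale r n (pw (1 - s) \<alpha>) (G s \<phi>)"
  by (auto simp: G_def scale_def pw_mult fun_eq_iff)

lemma G_wd:
  assumes "\<phi> \<in> topspace X" "\<psi> \<in> topspace X" "q \<phi> = q \<psi>" "s \<in> {0..1}"
  shows "q (G s \<phi>) = q (G s \<psi>)"
proof -
  obtain \<alpha> where a: "\<alpha> \<in> hcarrier F - {0}" "\<phi> = scale r n \<alpha> \<psi>"
    using orbit_eqD[OF assms(3)] assms(1) unfolding topspace_fun_space by (auto simp: PiE_def)
  have "pw (1 - s) \<alpha> \<in> hcarrier F - {0}" using a assms(4) pwC by auto
  then show ?thesis using a G_scale orbit_scale_eq by simp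
qed

lemma G0: "\<phi> \<in> topspace X \<Longrightarrow> G 0 \<phi> = \<phi>"
  unfolding topspace_fun_space G_def by (auto simp: fun_eq_iff PiE_def extensional_def)

lemma G1: "\<phi> \<in> topspace X \<Longrightarrow> G 1 \<phi> = restrict (f \<circ> \<phi>) (tuples r n)"
  unfolding topspace_fun_space G_def by (auto simp: fun_eq_iff PiE_def intro!: pw0)

lemma f_G: "\<phi> \<in> topspace X \<Longrightarrow> s \<in> {0..1} \<Longrightarrow> restrict (f \<circ> G s \<phi>) (tuples r n) = restrict (f \<circ> \<phi>) (tuples r n)"
  unfolding topspace_fun_space G_def by (auto simp: fun_eq_iff PiE_def intro!: f_pw)

definition "Hm s C = q (G s (rep C))"

lemma Hm_rep: "C \<in> R \<Longrightarrow> \<phi> \<in> C \<Longrightarrow> s \<in> {0..1} \<Longrightarrow> Hm s C = q (G s \<phi>)"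
  unfolding Hm_def using G_wd memC rep by metis

lemma Hm_R: assumes C: "C \<in> R" and s: "s \<in> {0..1}" shows "Hm s C \<in> R"
proof -
  obtain \<psi> where psi: "P F r n \<psi>" "C = q \<psi>"
    and ex: "\<exists>\<phi> \<in> C. orbit F' r n (restrict (f \<circ> \<phi>) (tuples r n)) = M" using R_D[OF C] by metis
  have ps: "\<psi> \<in> C" using psi orbit_self[of \<psi> r n] P_top[of \<psi>] by (auto simp: topspace_fun_space PiE_def)
  have "Hm s C = q (G s \<psi>)" using Hm_rep[OF C ps s] .
  moreover have "P F r n (G s \<psi>)" unfolding G_def using Ppw psi s by auto
  ultimately have gr: "Hm s C \<in> Gr P F r n" unfolding Gr_def by auto
  from ex obtain \<phi> where ph: "\<phi> \<in> C" "orbit F' r n (restrict (f \<circ> \<phi>) (tuples r n)) = M" by auto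
  have pt: "\<phi> \<in> topspace X" using memC[OF C ph(1)] by simp
  have "G s \<phi> \<in> Hm s C" using Hm_rep[OF C ph(1) s] orbit_self[of "G s \<phi>" r n] G_top[OF pt s]
    by (auto simp: topspace_fun_space PiE_def)
  moreover have "orbit F' r n (restrict (f \<circ> G s \<phi>) (tuples r n)) = M" using f_G[OF pt s] ph by simp
  ultimately show ?thesis using gr unfolding Real_set_def by auto
qed

lemma Hm_0: "C \<in> R \<Longrightarrow> Hm 0 C = C"
  unfolding Hm_def using G0 memC rep by metis

lemma orbitF'_eq:
  assumes "orbit F' r n ch = orbit F' r n ch0" "ch \<in> extensional (tuples r n)"
  shows "q ch = q ch0"
proof -
  have "ch \<in> orbit F' r n ch" unfolding orbit_scale using one' scale_one[OF assms(2)] by (auto intro!: exI[of _ 1])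
  then obtain \<beta> where b: "\<beta> \<in> hcarrier F' - {0}" "ch = scale r n \<beta> ch0" using assms(1) unfolding orbit_scale by auto
  then have "\<beta> \<in> hcarrier F - {0}" using sub' by auto
  then show ?thesis using b orbit_scale_eq by simp
qed

lemma Hm_1: assumes C: "C \<in> R" and C0: "C0 \<in> R" shows "Hm 1 C = Hm 1 C0"
proof -
  have key: "Hm 1 C = q (restrict (f \<circ> \<phi>) (tuples r n))" if C: "C \<in> R" and "\<phi> \<in> C" for C \<phi>
    using Hm_rep[OF C that(2)] G1 memC[OF C that(2)] by simp
  obtain \<phi> where ph: "\<phi> \<in> C" "orbit F' r n (restrict (f \<circ> \<phi>) (tuples r n)) = M" using R_D[OF C] by metis
  obtain \<phi>0 where ph0: "\<phi>0 \<in> C0" "orbit F' r n (restrict (f \<circ> \<phi>0) (tuples r n)) = M" using R_D[OF C0] by metis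
  have "q (restrict (f \<circ> \<phi>) (tuples r n)) = q (restrict (f \<circ> \<phi>0) (tuples r n))"
    using ph ph0 by (intro orbitF'_eq) auto
  then show ?thesis using key[OF C ph(1)] key[OF C0 ph0(1)] by simp
qed

lemma supp_const:
  assumes "\<phi> \<in> S" "\<psi> \<in> S" "x \<in> tuples r n"
  shows "\<phi> x = 0 \<longleftrightarrow> \<psi> x = 0"
proof -
  have aux: "\<exists>\<alpha> \<in> hcarrier F - {0}. orbit F' r n (restrict (f \<circ> scale r n \<alpha> \<phi>) (tuples r n)) = M"
    if "\<phi> \<in> S" for \<phi>
  proof -
    have p: "\<phi> \<in> topspace X" "q \<phi> \<in> R" using that by (auto simp: S_def)
    obtain \<phi>' where "\<phi>' \<in> q \<phi>" "orbit F' r n (restrict (f \<circ> \<phi>') (tuples r n)) = M"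
      using R_D[OF p(2)] by metis
    then show ?thesis unfolding orbit_scale by auto
  qed
  obtain \<alpha> where a: "\<alpha> \<in> hcarrier F - {0}" "orbit F' r n (restrict (f \<circ> scale r n \<alpha> \<phi>) (tuples r n)) = M"
    using aux[OF assms(1)] by blast
  obtain \<beta> where b: "\<beta> \<in> hcarrier F - {0}" "orbit F' r n (restrict (f \<circ> scale r n \<beta> \<psi>) (tuples r n)) = M"
    using aux[OF assms(2)] by blast
  have "restrict (f \<circ> scale r n \<alpha> \<phi>) (tuples r n) \<in> orbit F' r n (restrict (f \<circ> scale r n \<alpha> \<phi>) (tuples r n))"
    unfolding orbit_scale using one' by (auto intro!: exI[of _ 1] simp: scale_def fun_eq_iff)
  then obtain \<gamma> where g: "\<gamma> \<noteq> 0" "restrict (f \<circ> scale r n \<alpha> \<phi>) (tuples r n) = scale r n \<gamma> (restrict (f \<circ> scale r n \<beta> \<psi>) (tuples r n))"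
    using a b unfolding orbit_scale by auto
  then have e: "f (\<alpha> * \<phi> x) = \<gamma> * f (\<beta> * \<psi> x)" using assms(3)
    by (auto simp: scale_def fun_eq_iff dest: spec[of _ x])
  have pt: "\<phi> x \<in> hcarrier F" "\<psi> x \<in> hcarrier F" using assms by (auto simp: S_def topspace_fun_space)
  have "\<phi> x = 0 \<longleftrightarrow> f (\<alpha> * \<phi> x) = 0" using f0[OF mul[OF _ pt(1)]] a by auto
  also have "\<dots> \<longleftrightarrow> f (\<beta> * \<psi> x) = 0" using e g by auto
  also have "\<dots> \<longleftrightarrow> \<psi> x = 0" using f0[OF mul[OF _ pt(2)]] b by auto
  finally show ?thesis .
qed

end


context setting begin

abbreviation "Z \<equiv> prod_topology (top_of_set {0..1::real}) (subtopology X S)"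

lemma S_top: "S \<subseteq> topspace X" by (auto simp: S_def)

lemma R_subQ: "R \<subseteq> topspace Q" using R_sub topspace_Q by simp

lemma mem_topRT: "C \<in> topspace (subtopology Q R) \<longleftrightarrow> C \<in> R" using R_subQ by auto

lemma topspace_Z: "topspace Z = {0..1} \<times> S"
  using S_top by auto

lemma K_comp_cont:
  assumes k: "k \<in> tuples r n"
  shows "continuous_map Z euclidean (\<lambda>z. pw (1 - fst z) (snd z k))"
proof (cases "\<exists>\<phi>0\<in>S. \<phi>0 k \<noteq> 0")
  case True
  then have nz: "\<forall>\<phi>\<in>S. \<phi> k \<noteq> 0" using supp_const k by blast
  have m: "continuous_map Z (top_of_set ({0..1} \<times> (UNIV - {0}))) (\<lambda>z. (fst z, snd z k))"
    unfolding prod_topology_subtopology_eu[symmetric] continuous_map_paired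
  proof
    show "continuous_map Z (top_of_set {0..1}) fst" by (rule continuous_map_fst)
    have "continuous_map Z euclidean ((\<lambda>\<phi>. \<phi> k) \<circ> snd)"
      by (rule continuous_map_compose[OF continuous_map_snd])
        (rule continuous_map_from_subtopology[OF cont_proj_fun_space[OF k]])
    then show "continuous_map Z (top_of_set (UNIV - {0})) (\<lambda>z. snd z k)"
      unfolding continuous_map_in_subtopology using nz topspace_Z by (auto simp: o_def)
  qed
  have "continuous_map (top_of_set ({0..1} \<times> (UNIV - {0}))) euclidean (\<lambda>p. pw (1 - fst p) (snd p))"
    using pw_cont by simp
  from continuous_map_compose[OF m this] show ?thesis by (simp add: o_def)
next
  case False
  then have z: "\<forall>\<phi>\<in>S. \<phi> k = 0" by blast
  show ?thesis
    by (rule continuous_map_eq[of _ _ "\<lambda>_. 0"]) (use z topspace_Z in auto)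
qed

lemma K_cont: "continuous_map Z X (\<lambda>z. G (fst z) (snd z))"
proof (rule cont_into_fun_space)
  fix z assume "z \<in> topspace Z"
  then show "G (fst z) (snd z) \<in> topspace X" using topspace_Z S_top G_top by auto
next
  fix k assume k: "k \<in> tuples r n"
  show "continuous_map Z euclidean (\<lambda>z. G (fst z) (snd z) k)"
    using K_comp_cont[OF k] k by (simp add: G_def)
qed

lemma Hm_cont: "continuous_map (prod_topology (top_of_set {0..1::real}) (subtopology Q R)) (subtopology Q R)
   (\<lambda>z. Hm (fst z) (snd z))"
  unfolding continuous_map_def
proof (intro conjI allI impI)
  show "(\<lambda>z. Hm (fst z) (snd z)) \<in> topspace (prod_topology (top_of_set {0..1}) (subtopology Q R)) \<rightarrow>
      topspace (subtopology Q R)"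
  proof
    fix z assume "z \<in> topspace (prod_topology (top_of_set {0..1::real}) (subtopology Q R))"
    then have "fst z \<in> {0..1}" "snd z \<in> R" by (auto simp: mem_Times_iff)
    then show "Hm (fst z) (snd z) \<in> topspace (subtopology Q R)" unfolding mem_topRT using Hm_R by simp
  qed
  fix U assume U: "openin (subtopology Q R) U"
  then obtain U' where U': "openin Q U'" "U = U' \<inter> R" by (auto simp: openin_subtopology)
  have qc: "continuous_map X Q q" unfolding proj_top_def by (rule continuous_map_quot)
  have W: "openin Z {z \<in> topspace Z. q (G (fst z) (snd z)) \<in> U'}"
    using openin_continuous_map_preimage[OF continuous_map_compose[OF K_cont qc] U'(1)]
    by (simp add: o_def)
  show "openin (prod_topology (top_of_set {0..1}) (subtopology Q R))
     {x \<in> topspace (prod_topology (top_of_set {0..1}) (subtopology Q R)). Hm (fst x) (snd x) \<in> U}"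
    unfolding openin_prod_topology_alt
  proof (intro allI impI)
    fix s C assume sC: "(s, C) \<in> {x \<in> topspace (prod_topology (top_of_set {0..1}) (subtopology Q R)). Hm (fst x) (snd x) \<in> U}"
    then have s: "s \<in> {0..1}" and C: "C \<in> R" and HU: "Hm s C \<in> U'" using U' by (auto simp: mem_Times_iff)
    define \<phi> where "\<phi> = rep C"
    have phC: "\<phi> \<in> C" using rep[OF C] by (simp add: \<phi>_def)
    have phS: "\<phi> \<in> S" using memC[OF C phC] C by (simp add: S_def)
    have hr: "Hm s C = q (G s \<phi>)" by (rule Hm_rep[OF C phC s])
    have "(s, \<phi>) \<in> topspace Z" using s phS topspace_Z by simp
    then have mem: "(s, \<phi>) \<in> {z \<in> topspace Z. q (G (fst z) (snd z)) \<in> U'}"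
      using HU unfolding hr by simp
    have "\<exists>U V. openin (top_of_set {0..1}) U \<and> openin (subtopology X S) V \<and> s \<in> U \<and> \<phi> \<in> V \<and>
        U \<times> V \<subseteq> {z \<in> topspace Z. q (G (fst z) (snd z)) \<in> U'}"
      by (rule W[unfolded openin_prod_topology_alt, rule_format, OF mem])
    then obtain U0 V0 where UV: "openin (top_of_set {0..1}) U0" "openin (subtopology X S) V0"
        "s \<in> U0" "\<phi> \<in> V0" "U0 \<times> V0 \<subseteq> {z \<in> topspace Z. q (G (fst z) (snd z)) \<in> U'}"
      by (elim exE conjE) (rule that)
    obtain B' where B': "openin X B'" "V0 = B' \<inter> S" using UV(2) unfolding openin_subtopology by blast
    have "openin (subtopology Q R) (q ` B' \<inter> R)"
      unfolding openin_subtopology using q_open[OF B'(1)] by blast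
    moreover have "C \<in> q ` B' \<inter> R" using memC[OF C phC] UV(4) B' C by auto
    moreover have "U0 \<times> (q ` B' \<inter> R) \<subseteq> {x \<in> topspace (prod_topology (top_of_set {0..1}) (subtopology Q R)). Hm (fst x) (snd x) \<in> U}"
    proof safe
      fix s' \<phi>' assume s': "s' \<in> U0" and b: "\<phi>' \<in> B'" and qR: "q \<phi>' \<in> R"
      have s01: "s' \<in> {0..1}" using openin_subset[OF UV(1)] s' by auto
      have pt: "\<phi>' \<in> topspace X" using openin_subset[OF B'(1)] b by auto
      have "\<phi>' \<in> S" using pt qR by (simp add: S_def)
      then have "(s', \<phi>') \<in> U0 \<times> V0" using s' b B' by auto
      then have "q (G s' \<phi>') \<in> U'" using UV(5) by auto
      moreover have "\<phi>' \<in> q \<phi>'" using orbit_self[of \<phi>' r n] pt by (auto simp: topspace_fun_space PiE_def)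
      then have "Hm s' (q \<phi>') = q (G s' \<phi>')" by (rule Hm_rep[OF qR _ s01])
      ultimately have "Hm s' (q \<phi>') \<in> U'" by simp
      then show "Hm (fst (s', q \<phi>')) (snd (s', q \<phi>')) \<in> U"
        using Hm_R[OF qR s01] U'(2) by simp
      show "(s', q \<phi>') \<in> topspace (prod_topology (top_of_set {0..1}) (subtopology Q R))"
        using s01 qR R_subQ by auto
    qed
    ultimately show "\<exists>A V. openin (top_of_set {0..1}) A \<and> openin (subtopology Q R) V \<and> s \<in> A \<and> C \<in> V \<and>
        A \<times> V \<subseteq> {x \<in> topspace (prod_topology (top_of_set {0..1}) (subtopology Q R)). Hm (fst x) (snd x) \<in> U}"
      using UV(1,3) by blast
  qed
qed

lemma contractible: "contractible_space (Real_top P F F' f r n M)"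
proof (cases "R = {}")
  case True
  have "topspace (Real_top P F F' f r n M) = {}" unfolding Real_top_def using True by simp
  then have "Real_top P F F' f r n M = trivial_topology" using null_topspace_iff_trivial by blast
  then show ?thesis by simp
next
  case False
  then obtain C0 where C0: "C0 \<in> R" by auto
  define h where "h = (\<lambda>z::real \<times> _. if fst z = 0 then snd z else if fst z = 1 then Hm 1 C0 else Hm (fst z) (snd z))"
  have eq: "Hm (fst z) (snd z) = h z" if z: "z \<in> topspace (prod_topology (top_of_set {0..1::real}) (subtopology Q R))" for z
  proof -
    obtain s C where zz: "z = (s, C)" by fastforce
    have C: "C \<in> R" using z zz by (simp add: mem_Times_iff)
    show ?thesis
      unfolding zz h_def using Hm_0[OF C] Hm_1[OF C C0] by simp
  qed
  have "continuous_map (prod_topology (top_of_set {0..1::real}) (subtopology Q R)) (subtopology Q R) h"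
    by (rule continuous_map_eq[OF Hm_cont eq])
  then show ?thesis unfolding contractible_space_def homotopic_with_def Real_top_def
    by (intro exI[of _ "Hm 1 C0"] exI[of _ h]) (simp add: h_def)
qed

end


definition sub_hf :: "hyperfield \<Rightarrow> hyperfield \<Rightarrow> bool" where
  "sub_hf F1 F2 \<longleftrightarrow> hcarrier F1 \<subseteq> hcarrier F2 \<and> 0 \<in> hcarrier F1
     \<and> (\<forall>a\<in>hcarrier F1. \<forall>b\<in>hcarrier F1. a * b \<in> hcarrier F1)
     \<and> (\<forall>a\<in>hcarrier F1. hneg F1 a \<in> hcarrier F1 \<and> hneg F2 a = hneg F1 a)
     \<and> (\<forall>a\<in>hcarrier F1. \<forall>b\<in>hcarrier F1. hadd F1 a b \<subseteq> hcarrier F1 \<and> hadd F1 a b \<subseteq> hadd F2 a b)"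

lemma hsum_sub:
  assumes "sub_hf F1 F2"
  shows "set xs \<subseteq> hcarrier F1 \<Longrightarrow> hsum F1 xs \<subseteq> hcarrier F1 \<and> hsum F1 xs \<subseteq> hsum F2 xs"
proof (induction xs)
  case Nil then show ?case using assms by (simp add: sub_hf_def)
next
  case (Cons x xs)
  then have x: "x \<in> hcarrier F1" and IH: "hsum F1 xs \<subseteq> hcarrier F1" "hsum F1 xs \<subseteq> hsum F2 xs" by auto
  show ?case
  proof
    have cl: "\<And>a b. a \<in> hcarrier F1 \<Longrightarrow> b \<in> hcarrier F1 \<Longrightarrow> hadd F1 a b \<subseteq> hcarrier F1"
      using assms unfolding sub_hf_def by blast
    show "hsum F1 (x # xs) \<subseteq> hcarrier F1"
    proof (simp only: hsum.simps, rule UN_least)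
      fix y assume "y \<in> hsum F1 xs" then show "hadd F1 x y \<subseteq> hcarrier F1" using cl x IH by blast
    qed
    show "hsum F1 (x # xs) \<subseteq> hsum F2 (x # xs)"
    proof
      fix w assume "w \<in> hsum F1 (x # xs)"
      then obtain y where y: "y \<in> hsum F1 xs" "w \<in> hadd F1 x y" by auto
      have "w \<in> hadd F2 x y" using y x IH assms unfolding sub_hf_def by blast
      then show "w \<in> hsum F2 (x # xs)" using y IH by auto
    qed
  qed
qed

lemma hneg_iter_sub:
  assumes "sub_hf F1 F2" "a \<in> hcarrier F1"
  shows "(hneg F1 ^^ k) a \<in> hcarrier F1 \<and> (hneg F2 ^^ k) a = (hneg F1 ^^ k) a"
  using assms by (induction k) (auto simp: sub_hf_def)

lemma GP_rel_sub:
  assumes sub: "sub_hf F1 F2" and r: "0 < r" and phi: "\<phi> \<in> tuples r n \<rightarrow>\<^sub>E hcarrier F1"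
    and ii: "ii \<in> tuples (Suc r) n" and js: "js \<in> tuples (r - 1) n"
    and gp: "GP_rel F1 r \<phi> ii js"
  shows "GP_rel F2 r \<phi> ii js"
proof -
  let ?L = "map (\<lambda>k. (hneg F1 ^^ (Suc k)) (\<phi> (del_at k ii) * \<phi> ((ii ! k) # js))) [0..<Suc r]"
  have m: "\<phi> (del_at k ii) * \<phi> ((ii ! k) # js) \<in> hcarrier F1" if "k < Suc r" for k
    using sub phi tuples_del_at[OF ii that] tuples_cons[OF ii that js r] unfolding sub_hf_def by blast
  have C: "set ?L \<subseteq> hcarrier F1"
  proof
    fix w assume "w \<in> set ?L"
    then obtain k where k: "k < Suc r" and w: "w = (hneg F1 ^^ (Suc k)) (\<phi> (del_at k ii) * \<phi> ((ii ! k) # js))"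
      by (auto simp del: upt_Suc funpow.simps)
    then show "w \<in> hcarrier F1" using hneg_iter_sub[OF sub m[OF k]] by blast
  qed
  have eq: "map (\<lambda>k. (hneg F2 ^^ (Suc k)) (\<phi> (del_at k ii) * \<phi> ((ii ! k) # js))) [0..<Suc r] = ?L"
    using hneg_iter_sub[OF sub m] by (auto simp del: upt_Suc funpow.simps)
  have "0 \<in> hsum F1 ?L" using gp unfolding GP_rel_def .
  then show ?thesis using hsum_sub[OF sub C] unfolding GP_rel_def eq by blast
qed

lemma alternating_sub:
  assumes sub: "sub_hf F1 F2" and phi: "\<phi> \<in> tuples r n \<rightarrow>\<^sub>E hcarrier F1" and alt: "alternating F1 r n \<phi>"
  shows "alternating F2 r n \<phi>"
  unfolding alternating_def
proof (intro conjI ballI allI impI)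
  fix xs assume "xs \<in> tuples r n" "\<not> distinct xs"
  then show "\<phi> xs = 0" using alt unfolding alternating_def by blast
next
  fix xs k l assume xs: "xs \<in> tuples r n" and kl: "k < l \<and> l < r"
  have "\<phi> xs \<in> hcarrier F1" using phi xs by blast
  then have "hneg F2 (\<phi> xs) = hneg F1 (\<phi> xs)" using sub unfolding sub_hf_def by blast
  moreover have "\<phi> (xs[k := xs ! l, l := xs ! k]) = hneg F1 (\<phi> xs)"
    using alt xs kl unfolding alternating_def by blast
  ultimately show "\<phi> (xs[k := xs ! l, l := xs ! k]) = hneg F2 (\<phi> xs)" by simp
qed

lemma strong_sub:
  assumes sub: "sub_hf F1 F2" and r: "0 < r" and s: "strong_GP F1 r n \<phi>"
  shows "strong_GP F2 r n \<phi>"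
proof -
  have "\<phi> \<in> tuples r n \<rightarrow>\<^sub>E hcarrier F2" using s sub unfolding strong_GP_def sub_hf_def by (meson PiE_mono subsetD)
  moreover have "alternating F2 r n \<phi>" using s alternating_sub[OF sub] unfolding strong_GP_def by blast
  moreover have "\<forall>ii \<in> tuples (Suc r) n. \<forall>js \<in> tuples (r - 1) n. GP_rel F2 r \<phi> ii js"
    using s GP_rel_sub[OF sub r] unfolding strong_GP_def by blast
  ultimately show ?thesis using s unfolding strong_GP_def by blast
qed

lemma weak_sub:
  assumes sub: "sub_hf F1 F2" and r: "0 < r" and s: "weak_GP F1 r n \<phi>"
  shows "weak_GP F2 r n \<phi>"
proof -
  have "\<phi> \<in> tuples r n \<rightarrow>\<^sub>E hcarrier F2" using s sub unfolding weak_GP_def sub_hf_def by (meson PiE_mono subsetD)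
  moreover have "alternating F2 r n \<phi>" using s alternating_sub[OF sub] unfolding weak_GP_def by blast
  moreover have "\<forall>ii \<in> tuples (Suc r) n. \<forall>js \<in> tuples (r - 1) n.
        card (set ii - set js) = 3 \<longrightarrow> GP_rel F2 r \<phi> ii js"
    using s GP_rel_sub[OF sub r] unfolding weak_GP_def by blast
  ultimately show ?thesis using s unfolding weak_GP_def by blast
qed


lemma hnegK: "hneg Krasner = (\<lambda>a. a)" by (simp add: Krasner_def)

lemma hsumK_zeros: "\<forall>x\<in>set zs. x = 0 \<Longrightarrow> hsum Krasner zs = {0}"
  by (induction zs) (auto simp: Krasner_def)

lemma hsumK_single: "\<forall>x\<in>set zs. x = 0 \<Longrightarrow> hsum Krasner (a # zs) = {a}"
  using hsumK_zeros[of zs] by (auto simp: Krasner_def)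

lemma funpow_idK: "((\<lambda>a::complex. a) ^^ k) = (\<lambda>a. a)"
  by (induction k) auto

lemma K_strong_weak:
  assumes r: "0 < r" and s: "strong_GP Krasner r n \<phi>"
  shows "weak_GP Krasner r n \<phi>"
proof -
  have alt: "alternating Krasner r n \<phi>" and gp: "\<forall>ii \<in> tuples (Suc r) n. \<forall>js \<in> tuples (r - 1) n. GP_rel Krasner r \<phi> ii js"
    and ne: "\<exists>xs \<in> tuples r n. \<phi> xs \<noteq> 0" using s unfolding strong_GP_def by auto
  have nd: "\<phi> xs = 0" if "xs \<in> tuples r n" "\<not> distinct xs" for xs
    using alt that unfolding alternating_def by blast
  have sw: "\<phi> (xs[k := xs ! l, l := xs ! k]) = \<phi> xs" if "xs \<in> tuples r n" "k < l" "l < r" for xs k l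
    using alt that unfolding alternating_def hnegK by blast
  let ?B = "{set xs |xs. xs \<in> tuples r n \<and> \<phi> xs \<noteq> 0}"
  have mb: "matroid_bases {1..n} ?B"
    unfolding matroid_bases_def
  proof (intro conjI ballI)
    show "?B \<noteq> {}" using ne by auto
    fix X assume "X \<in> ?B" then show "X \<subseteq> {1..n}" by (auto simp: tuples_def)
  next
    fix B1 B2 x assume B1: "B1 \<in> ?B" and B2: "B2 \<in> ?B" and x: "x \<in> B1 - B2"
    obtain xs1 where xs1: "B1 = set xs1" "xs1 \<in> tuples r n" "\<phi> xs1 \<noteq> 0" using B1 by auto
    obtain xs2 where xs2: "B2 = set xs2" "xs2 \<in> tuples r n" "\<phi> xs2 \<noteq> 0" using B2 by auto
    have len1: "length xs1 = r" and len2: "length xs2 = r" using xs1 xs2 by (auto simp: tuples_def)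
    have d1: "distinct xs1" using nd xs1 by blast
    obtain i where i: "i < r" "xs1 ! i = x" using x xs1(1) len1 by (auto simp: in_set_conv_nth)
    define ys1 where "ys1 = xs1[0 := xs1 ! i, i := xs1 ! 0]"
    have ys1T: "ys1 \<in> tuples r n" unfolding ys1_def using tuples_swap[OF xs1(2) _ i(1)] r by simp
    have phys: "\<phi> ys1 \<noteq> 0"
    proof (cases "i = 0")
      case True then show ?thesis using xs1 by (simp add: ys1_def)
    next
      case False then show ?thesis using sw[OF xs1(2), of 0 i] i xs1 by (simp add: ys1_def)
    qed
    have leny: "length ys1 = r" by (simp add: ys1_def len1)
    have y0: "ys1 ! 0 = x" using i r len1 by (cases "i = 0") (auto simp: ys1_def nth_list_update)
    define js where "js = tl ys1"
    have ysc: "ys1 = x # js" using y0 leny r unfolding js_def by (cases ys1) auto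
    have dy: "distinct ys1" using nd[OF ys1T] phys by blast
    have sety: "set ys1 = set xs1" unfolding ys1_def using i r len1 set_swap[of 0 xs1 i] by simp
    have setjs: "set js = set xs1 - {x}" using dy sety ysc by auto
    have jsT: "js \<in> tuples (r - 1) n" using ys1T ysc by (auto simp: tuples_def)
    have xn: "x \<in> {1..n}" using x xs1 by (auto simp: tuples_def)
    have iiT: "x # xs2 \<in> tuples (Suc r) n" using xs2 xn by (auto simp: tuples_def)
    let ?t = "\<lambda>k. \<phi> (del_at k (x # xs2)) * \<phi> (((x # xs2) ! k) # js)"
    have g: "0 \<in> hsum Krasner (map ?t [0..<Suc r])"
      using gp iiT jsT unfolding GP_rel_def hnegK funpow_idK by blast
    have t0: "?t 0 \<noteq> 0" using xs2 phys ysc by (simp add: del_at_def)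
    have "\<exists>k \<in> set [1..<Suc r]. ?t k \<noteq> 0"
    proof (rule ccontr)
      assume "\<not> ?thesis"
      then have "\<forall>z \<in> set (map ?t [1..<Suc r]). z = 0" by auto
      then have "hsum Krasner (?t 0 # map ?t [1..<Suc r]) = {?t 0}" by (rule hsumK_single)
      moreover have "[0..<Suc r] = 0 # [1..<Suc r]" by (simp add: upt_conv_Cons)
      ultimately show False using g t0 by simp
    qed
    then obtain k where k: "1 \<le> k" "k \<le> r" "?t k \<noteq> 0" by auto
    define y where "y = (x # xs2) ! k"
    have yx: "y = xs2 ! (k - 1)" using k by (simp add: y_def)
    have yB2: "y \<in> set xs2" using yx k len2 by simp
    have "k < Suc r" using k by simp
    from tuples_cons[OF iiT this jsT r] have yjsT: "y # js \<in> tuples r n" unfolding y_def .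
    have "\<phi> (y # js) \<noteq> 0" using k(3) by (simp add: y_def)
    then have "distinct (y # js)" using nd[OF yjsT] by blast
    then have ynj: "y \<notin> set js" by simp
    have "y \<noteq> x" using yB2 x xs2 by auto
    then have "y \<in> B2 - B1" using ynj setjs yB2 xs1 xs2 by auto
    moreover have "insert y (B1 - {x}) = set (y # js)" using setjs xs1 by auto
    moreover have "\<phi> (y # js) \<noteq> 0" using k(3) by (simp add: y_def)
    ultimately show "\<exists>y\<in>B2 - B1. insert y (B1 - {x}) \<in> ?B" using yjsT by blast
  qed
  then show ?thesis using s unfolding strong_GP_def weak_GP_def by auto
qed


lemma sub_K_T: "sub_hf Krasner Triangle"
proof -
  have c: "(0::complex) \<in> complex_of_real ` {0..}" "(1::complex) \<in> complex_of_real ` {0..}"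
    by (force intro: image_eqI[where x=0], force intro: image_eqI[where x=1])
  have h11: "{0, 1} \<subseteq> complex_of_real ` {0..2}"
    by (auto intro: image_eqI[where x=0] image_eqI[where x=1])
  have h01: "(1::complex) \<in> complex_of_real ` {1..1}" by (force intro: image_eqI[where x=1])
  have h00: "complex_of_real ` {0..0} = {0}" by simp
  show ?thesis unfolding sub_hf_def using c h11 h01
    by (auto simp: Krasner_def Triangle_def)
qed

lemma sub_K_TT: "sub_hf Krasner TropTriangle"
proof -
  have c: "(0::complex) \<in> complex_of_real ` {0..}" "(1::complex) \<in> complex_of_real ` {0..}"
    by (force intro: image_eqI[where x=0], force intro: image_eqI[where x=1])
  have h11: "{0, 1} \<subseteq> complex_of_real ` {0..1}"
    by (auto intro: image_eqI[where x=0] image_eqI[where x=1])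
  show ?thesis unfolding sub_hf_def using c h11
    by (auto simp: Krasner_def TropTriangle_def)
qed

lemma sub_S_TR: "sub_hf Sign TropReal"
proof -
  have h: "{-1, 0, 1} \<subseteq> complex_of_real ` {-1..1}"
    by (auto intro: image_eqI[where x=0] image_eqI[where x=1] image_eqI[where x="-1"])
  show ?thesis unfolding sub_hf_def using h
    by (auto simp: Sign_def TropReal_def)
qed

lemma ph_in_unit: "ph w \<in> {z. cmod z = 1} \<union> {0}"
  by (cases "w = 0") (auto simp: ph_def norm_divide)

lemma TC_carrier: "hcarrier TropComplex = UNIV" by (simp add: TropComplex_def)
lemma TC_hneg: "hneg TropComplex = uminus" by (simp add: TropComplex_def)

lemma sub_P_TC: "sub_hf Phase TropComplex"
  unfolding sub_hf_def
proof (intro conjI ballI)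
  fix a b assume a: "a \<in> hcarrier Phase" and b: "b \<in> hcarrier Phase"
  have a': "a = 0 \<or> cmod a = 1" and b': "b = 0 \<or> cmod b = 1" using a b by (auto simp: Phase_def)
  show "hadd Phase a b \<subseteq> hcarrier Phase"
    using a b ph_in_unit by (auto simp: Phase_def unit_arc_def)
  show "hadd Phase a b \<subseteq> hadd TropComplex a b"
  proof (cases "a = 0")
    case True
    show ?thesis
    proof (cases "b = 0")
      case True
      then show ?thesis using \<open>a = 0\<close> TC_hadd_neg[of 0] by (simp add: Phase_def)
    next
      case False
      then show ?thesis using \<open>a = 0\<close> TC_hadd_lt[of a b] by (simp add: Phase_def)
    qed
  next
    case an: False
    show ?thesis
    proof (cases "b = 0")
      case True
      then show ?thesis using an TC_hadd_gt[of b a] by (simp add: Phase_def)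
    next
      case bn: False
      have ca: "cmod a = 1" and cb: "cmod b = 1" using a' b' an bn by auto
      show ?thesis
      proof (cases "a = b")
        case True
        then show ?thesis using an TC_mem_big[of b a] by (simp add: Phase_def)
      next
        case ab: False
        show ?thesis
        proof (cases "b = - a")
          case True
          then have "hadd TropComplex a b = cball 0 1" using TC_hadd_neg[of a] ca by simp
          moreover have "hadd Phase a b = {z. cmod z = 1} \<union> {0}"
            using True an ab bn unfolding Phase_def by (simp only: hyperfield.simps if_False if_True refl)
          moreover have "{z. cmod z = 1} \<union> {0} \<subseteq> cball (0::complex) 1" by auto
          ultimately show ?thesis by simp
        next
          case False
          have "hadd TropComplex a b = {complex_of_real (cmod a) * ph ((1 - complex_of_real t) * a + complex_of_real t * b) | t. t \<in> {0..1}}"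
            using TC_hadd_arc[of a b] ca cb False by simp
          then show ?thesis using an bn ab False ca by (simp add: Phase_def unit_arc_def)
        qed
      qed
    qed
  qed
next
  fix a assume "a \<in> hcarrier Phase"
  then show "hneg Phase a \<in> hcarrier Phase" "hneg TropComplex a = hneg Phase a"
    by (auto simp: Phase_def TC_hneg)
next
  fix a b assume "a \<in> hcarrier Phase" "b \<in> hcarrier Phase"
  then show "a * b \<in> hcarrier Phase" by (auto simp: Phase_def norm_mult)
qed (auto simp: Phase_def TC_carrier)


lemma setting_gen:
  assumes g: "grp F" and o: "1 \<in> hcarrier F'" and sub: "hcarrier F' - {0} \<subseteq> hcarrier F"
    and ok: "\<And>t. t \<in> {0..1} \<Longrightarrow> pw_ok F t"
    and fpw: "\<And>t a. t \<in> {0..1} \<Longrightarrow> a \<in> hcarrier F \<Longrightarrow> f (pw t a) = f a"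
    and p0: "\<And>a. a \<in> hcarrier F \<Longrightarrow> pw 0 a = f a"
    and f0: "\<And>a. a \<in> hcarrier F \<Longrightarrow> f a = 0 \<longleftrightarrow> a = 0"
    and P: "P \<in> {strong_GP, weak_GP}" and r: "0 < r"
  shows "setting F F' f P r n"
proof -
  have Ppw: "P F r n (restrict (\<lambda>x. pw t (\<phi> x)) (tuples r n))" if "t \<in> {0..1}" "P F r n \<phi>" for t \<phi>
    using P strong_pw[OF ok[OF that(1)] r] weak_pw[OF ok[OF that(1)] r] that(2) by auto
  have Pin: "\<phi> \<in> tuples r n \<rightarrow>\<^sub>E hcarrier F \<and> (\<exists>xs\<in>tuples r n. \<phi> xs \<noteq> 0)" if "P F r n \<phi>" for \<phi>
    using P that unfolding strong_GP_def weak_GP_def by auto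
  have pwC: "pw t a \<in> hcarrier F" if "t \<in> {0..1}" "a \<in> hcarrier F" for t a
    using ok[OF that(1)] that(2) unfolding pw_ok_def by blast
  show ?thesis
    unfolding setting_def setting_axioms_def
    by (intro conjI g o sub allI impI) (use fpw p0 f0 Ppw Pin pwC in blast)+
qed

lemma real_nonempty:
  assumes g: "grp F" and P: "P F r n \<psi>" and e: "\<psi> \<in> extensional (tuples r n)"
    and M: "orbit F' r n (restrict (f \<circ> \<psi>) (tuples r n)) = M"
  shows "Real_set P F F' f r n M \<noteq> {}"
proof -
  have "orbit F r n \<psi> \<in> Gr P F r n" using P unfolding Gr_def by auto
  moreover have "\<psi> \<in> orbit F r n \<psi>" using grp.orbit_self[OF g e] .
  ultimately have "orbit F r n \<psi> \<in> Real_set P F F' f r n M" using M unfolding Real_set_def by auto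
  then show ?thesis by auto
qed

lemma restrict_id_on:
  assumes "\<psi> \<in> tuples r n \<rightarrow>\<^sub>E C" "\<And>z. z \<in> C \<Longrightarrow> f z = z"
  shows "restrict (f \<circ> \<psi>) (tuples r n) = \<psi>"
  using assms by (auto simp: fun_eq_iff PiE_def extensional_def)

lemma grp_nonneg:
  assumes "hcarrier F = complex_of_real ` {0..}"
  shows "grp F"
  unfolding grp_def assms
proof (intro conjI allI impI)
  show "1 \<in> complex_of_real ` {0..}" by (rule image_eqI[where x=1]) auto
  fix a b assume "a \<in> complex_of_real ` {0..}" "b \<in> complex_of_real ` {0..}"
  then obtain x y where "a = complex_of_real x" "x \<ge> 0" "b = complex_of_real y" "y \<ge> 0" by auto
  then show "a * b \<in> complex_of_real ` {0..}" by (intro image_eqI[where x="x*y"]) auto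
next
  fix a assume "a \<in> complex_of_real ` {0..}" "a \<noteq> 0"
  then obtain x where "a = complex_of_real x" "x \<ge> 0" by auto
  then show "inverse a \<in> complex_of_real ` {0..}" by (intro image_eqI[where x="inverse x"]) (auto simp: of_real_inverse)
qed

lemma toK_pw: "toK (pw t a) = toK a" by (simp add: toK_def)
lemma ph_zero_iff: "ph a = 0 \<longleftrightarrow> a = 0" by (simp add: ph_def)

lemma pw0_nonneg: "a \<in> complex_of_real ` {0..} \<Longrightarrow> pw 0 a = toK a"
  by (auto simp: pw_zero_exp ph_def toK_def)

lemma set_Tri:
  assumes "P \<in> {strong_GP, weak_GP}" "0 < r"
  shows "setting Triangle Krasner toK P r n"
  by (rule setting_gen[OF grp_nonneg]) (use assms pw_ok_Triangle in \<open>auto simp: Triangle_def Krasner_def toK_pw pw0_nonneg toK_def\<close>)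

lemma set_TT:
  assumes "0 < r"
  shows "setting TropTriangle Krasner toK strong_GP r n"
  by (rule setting_gen[OF grp_nonneg]) (use assms pw_ok_TropTriangle in \<open>auto simp: TropTriangle_def Krasner_def toK_pw pw0_nonneg toK_def\<close>)

lemma grp_TR: "grp TropReal"
  unfolding grp_def by (auto simp: TropReal_def)

lemma set_TR:
  assumes "0 < r"
  shows "setting TropReal Sign ph strong_GP r n"
  by (rule setting_gen[OF grp_TR]) (use assms pw_ok_TropReal in \<open>auto simp: TropReal_def Sign_def ph_pw pw_zero_exp ph_zero_iff\<close>)

lemma grp_TC: "grp TropComplex"
  unfolding grp_def by (simp add: TC_carrier)

lemma set_TC:
  assumes "P \<in> {strong_GP, weak_GP}" "0 < r"
  shows "setting TropComplex Phase ph P r n"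
  by (rule setting_gen[OF grp_TC]) (use assms pw_ok_TropComplex in \<open>auto simp: TC_carrier ph_pw pw_zero_exp ph_zero_iff Phase_def\<close>)


lemma grp_Tri: "grp Triangle" by (rule grp_nonneg) (simp add: Triangle_def)
lemma grp_TT: "grp TropTriangle" by (rule grp_nonneg) (simp add: TropTriangle_def)

lemma Gr_obtain:
  assumes "M \<in> Gr P F r n"
  obtains \<psi> where "P F r n \<psi>" "M = orbit F r n \<psi>"
  using assms unfolding Gr_def by auto

lemma part1:
  assumes P: "P \<in> {strong_GP, weak_GP}" and r: "0 < r" and M: "M \<in> Gr strong_GP Krasner r n"
  shows "contractible_space (Real_top P Triangle Krasner toK r n M) \<and> Real_set P Triangle Krasner toK r n M \<noteq> {}"
proof
  show "contractible_space (Real_top P Triangle Krasner toK r n M)"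
    using setting.contractible[OF set_Tri[OF P r]] .
  obtain \<psi> where psi: "strong_GP Krasner r n \<psi>" "M = orbit Krasner r n \<psi>" using Gr_obtain[OF M] .
  have pie: "\<psi> \<in> tuples r n \<rightarrow>\<^sub>E hcarrier Krasner" using psi unfolding strong_GP_def by blast
  have Pp: "P Triangle r n \<psi>"
    using P strong_sub[OF sub_K_T r psi(1)] weak_sub[OF sub_K_T r K_strong_weak[OF r psi(1)]] by auto
  have "restrict (toK \<circ> \<psi>) (tuples r n) = \<psi>"
    by (rule restrict_id_on[OF pie]) (auto simp: Krasner_def toK_def)
  then show "Real_set P Triangle Krasner toK r n M \<noteq> {}"
  proof -
    assume eq: "restrict (toK \<circ> \<psi>) (tuples r n) = \<psi>"
    have ex: "\<psi> \<in> extensional (tuples r n)" using pie by (simp add: PiE_def)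
    have "orbit Krasner r n (restrict (toK \<circ> \<psi>) (tuples r n)) = M" using eq psi(2) by simp
    from real_nonempty[where F=Triangle and P=P and r=r and n=n and \<psi>=\<psi> and F'=Krasner and f=toK and M=M, OF grp_Tri Pp ex this] show ?thesis .
  qed
qed

lemma part2:
  assumes r: "0 < r" and M: "M \<in> Gr strong_GP Krasner r n"
  shows "contractible_space (Real_top strong_GP TropTriangle Krasner toK r n M) \<and> Real_set strong_GP TropTriangle Krasner toK r n M \<noteq> {}"
proof
  show "contractible_space (Real_top strong_GP TropTriangle Krasner toK r n M)"
    using setting.contractible[OF set_TT[OF r]] .
  obtain \<psi> where psi: "strong_GP Krasner r n \<psi>" "M = orbit Krasner r n \<psi>" using Gr_obtain[OF M] .
  have pie: "\<psi> \<in> tuples r n \<rightarrow>\<^sub>E hcarrier Krasner" using psi unfolding strong_GP_def by blast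
  have Pp: "strong_GP TropTriangle r n \<psi>" using strong_sub[OF sub_K_TT r psi(1)] .
  have "restrict (toK \<circ> \<psi>) (tuples r n) = \<psi>"
    by (rule restrict_id_on[OF pie]) (auto simp: Krasner_def toK_def)
  then show "Real_set strong_GP TropTriangle Krasner toK r n M \<noteq> {}"
  proof -
    assume eq: "restrict (toK \<circ> \<psi>) (tuples r n) = \<psi>"
    have ex: "\<psi> \<in> extensional (tuples r n)" using pie by (simp add: PiE_def)
    have "orbit Krasner r n (restrict (toK \<circ> \<psi>) (tuples r n)) = M" using eq psi(2) by simp
    from real_nonempty[where F=TropTriangle and P=strong_GP and r=r and n=n and \<psi>=\<psi> and F'=Krasner and f=toK and M=M, OF grp_TT Pp ex this] show ?thesis .
  qed
qed

lemma part3: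
  assumes r: "0 < r" and M: "M \<in> Gr strong_GP Sign r n"
  shows "contractible_space (Real_top strong_GP TropReal Sign ph r n M) \<and> Real_set strong_GP TropReal Sign ph r n M \<noteq> {}"
proof
  show "contractible_space (Real_top strong_GP TropReal Sign ph r n M)"
    using setting.contractible[OF set_TR[OF r]] .
  obtain \<psi> where psi: "strong_GP Sign r n \<psi>" "M = orbit Sign r n \<psi>" using Gr_obtain[OF M] .
  have pie: "\<psi> \<in> tuples r n \<rightarrow>\<^sub>E hcarrier Sign" using psi unfolding strong_GP_def by blast
  have Pp: "strong_GP TropReal r n \<psi>" using strong_sub[OF sub_S_TR r psi(1)] .
  have "restrict (ph \<circ> \<psi>) (tuples r n) = \<psi>"
    by (rule restrict_id_on[OF pie]) (auto simp: Sign_def ph_def)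
  then show "Real_set strong_GP TropReal Sign ph r n M \<noteq> {}"
  proof -
    assume eq: "restrict (ph \<circ> \<psi>) (tuples r n) = \<psi>"
    have ex: "\<psi> \<in> extensional (tuples r n)" using pie by (simp add: PiE_def)
    have "orbit Sign r n (restrict (ph \<circ> \<psi>) (tuples r n)) = M" using eq psi(2) by simp
    from real_nonempty[where F=TropReal and P=strong_GP and r=r and n=n and \<psi>=\<psi> and F'=Sign and f=ph and M=M, OF grp_TR Pp ex this] show ?thesis .
  qed
qed

lemma part4:
  assumes P: "P \<in> {strong_GP, weak_GP}" and r: "0 < r" and M: "M \<in> Gr P Phase r n"
  shows "contractible_space (Real_top P TropComplex Phase ph r n M) \<and> Real_set P TropComplex Phase ph r n M \<noteq> {}"
proof
  show "contractible_space (Real_top P TropComplex Phase ph r n M)"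
    using setting.contractible[OF set_TC[OF P r]] .
  obtain \<psi> where psi: "P Phase r n \<psi>" "M = orbit Phase r n \<psi>" using Gr_obtain[OF M] .
  have pie: "\<psi> \<in> tuples r n \<rightarrow>\<^sub>E hcarrier Phase" using psi P unfolding strong_GP_def weak_GP_def by auto
  have Pp: "P TropComplex r n \<psi>"
    using P psi(1) strong_sub[OF sub_P_TC r] weak_sub[OF sub_P_TC r] by auto
  have "restrict (ph \<circ> \<psi>) (tuples r n) = \<psi>"
    by (rule restrict_id_on[OF pie]) (auto simp: Phase_def ph_def)
  then show "Real_set P TropComplex Phase ph r n M \<noteq> {}"
  proof -
    assume eq: "restrict (ph \<circ> \<psi>) (tuples r n) = \<psi>"
    have ex: "\<psi> \<in> extensional (tuples r n)" using pie by (simp add: PiE_def)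
    have "orbit Phase r n (restrict (ph \<circ> \<psi>) (tuples r n)) = M" using eq psi(2) by simp
    from real_nonempty[where F=TropComplex and P=P and r=r and n=n and \<psi>=\<psi> and F'=Phase and f=ph and M=M, OF grp_TC Pp ex this] show ?thesis .
  qed
qed

theorem corollary5p4:
  fixes r n :: nat
  assumes "0 < r"
  shows
   "(\<forall>P \<in> {strong_GP, weak_GP}. \<forall>M \<in> Gr strong_GP Krasner r n.
        contractible_space (Real_top P Triangle Krasner toK r n M) \<and>
        Real_set P Triangle Krasner toK r n M \<noteq> {})
    \<and> (\<forall>M \<in> Gr strong_GP Krasner r n.
        contractible_space (Real_top strong_GP TropTriangle Krasner toK r n M) \<and>
        Real_set strong_GP TropTriangle Krasner toK r n M \<noteq> {})
    \<and> (\<forall>M \<in> Gr strong_GP Sign r n.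
        contractible_space (Real_top strong_GP TropReal Sign ph r n M) \<and>
        Real_set strong_GP TropReal Sign ph r n M \<noteq> {})
    \<and> (\<forall>P \<in> {strong_GP, weak_GP}. \<forall>M \<in> Gr P Phase r n.
        contractible_space (Real_top P TropComplex Phase ph r n M) \<and>
        Real_set P TropComplex Phase ph r n M \<noteq> {})"
  using part1[OF _ assms] part2[OF assms] part3[OF assms] part4[OF _ assms] by blast


end
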